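(* Assume (A1)–(A3). If $m_1<0$, then for every $\theta>0$ and $k\in\mathbb N$ there exist $C>0$ and $\delta>0$ such that for all $i\in\mathbb N$ and $n\in\mathbb N$, \[\mathbb P_{(i,0)}\bigl(|Y_1(T_1(k))|\ge n\bigr)\le C\exp(\theta i-\delta n),\] where $T_1(k)=\inf\{n>0: X_1(n)=k\}$.
   Context: Let $\mathbb N=\{0,1,2,\dots\}$ and fix an integer $k_0\ge1$. Let $\mu$, $\mu'_j$ ($0\le j<k_0$), $\mu''_i$ ($0\le i<k_0$), $\mu_{ij}$ ($0\le i,j<k_0$) be probability measures on $\mathbb Z^2$. The random walk $Z=(X(n),Y(n))$ on $\mathbb N^2$ has transition probabilities $p((i,j)\to(i',j'))$ equal to $\mu(i'-i,j'-j)$ if $i,j\ge k_0$; $\mu'_j(i'-i,j'-j)$ if $i\ge k_0$, $0\le j<k_0$; $\mu''_i(i'-i,j'-j)$ if $0\le i<k_0$, $j\ge k_0$; $\mu_{ij}(i'-i,j'-j)$ if $0\le i,j<k_0$. Assumptions: (A1) $\mu(a,b)=0$ if $a<-k_0$ or $b<-k_0$; $\mu'_j(a,b)=0$ if $a<-k_0$ or $b<-j$; $\mu''_i(a,b)=0$ if $b<-k_0$ or $a<-i$; $\mu_{ij}(a,b)=0$ if $a<-i$ or $b<-j$. (A2) There are $\delta,\gamma,C>0$ with $\sup_{(i,j)\in\mathbb N^2}\mathbb E_{(i,j)}[\exp(\delta(X(1)-i)+\gamma(Y(1)-j))]\le C$. (A3) $Z_0,Z_1,Z_2,Z$ are irreducible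 on their state spaces. $Z_0$: random walk on $\mathbb Z^2$ with increment law $\mu$; $m_1=\sum a\mu(a,b)$. $Z_1=(X_1,Y_1)$: Markov chain on $\mathbb N\times\mathbb Z$ with transitions $\mu(i'-i,j'-j)$ from $(i,j)$ if $i\ge k_0$ and $\mu''_i(i'-i,j'-j)$ if $0\le i<k_0$; $\mathbb P_{(i,j)}$ is its law from $(i,j)$. $Z_2$: Markov chain on $\mathbb Z\times\mathbb N$ with transitions $\mu$ if $j\ge k_0$ and $\mu'_j$ if $0\le j<k_0$. *)

theory Defs
  imports "HOL-Probability.Probability"
begin

type_synonym state = "int \<times> int"
type_synonym kernel = "state \<Rightarrow> state pmf"

definition shift :: "state \<Rightarrow> state pmf \<Rightarrow> state pmf" where
  "shift z m = map_pmf (\<lambda>(a,b). (fst z + a, snd z + b)) m"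

text \<open>Transition kernel of the walk Z on N^2.
  mu1 j plays the role of mu'_j (i >= k0, j < k0),
  mu2 i plays the role of mu''_i (i < k0, j >= k0),
  mu0 i j plays the role of mu_ij.\<close>
definition kerZ :: "int \<Rightarrow> state pmf \<Rightarrow> (nat \<Rightarrow> state pmf) \<Rightarrow> (nat \<Rightarrow> state pmf)
    \<Rightarrow> (nat \<Rightarrow> nat \<Rightarrow> state pmf) \<Rightarrow> kernel" where
  "kerZ k0 mu mu1 mu2 mu0 z = shift z
     (if fst z \<ge> k0 \<and> snd z \<ge> k0 then mu
      else if fst z \<ge> k0 then mu1 (nat (snd z))
      else if snd z \<ge> k0 then mu2 (nat (fst z))
      else mu0 (nat (fst z)) (nat (snd z)))"

definition kerZ0 :: "state pmf \<Rightarrow> kernel" where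
  "kerZ0 mu z = shift z mu"

definition kerZ1 :: "int \<Rightarrow> state pmf \<Rightarrow> (nat \<Rightarrow> state pmf) \<Rightarrow> kernel" where
  "kerZ1 k0 mu mu2 z = shift z (if fst z \<ge> k0 then mu else mu2 (nat (fst z)))"

definition kerZ2 :: "int \<Rightarrow> state pmf \<Rightarrow> (nat \<Rightarrow> state pmf) \<Rightarrow> kernel" where
  "kerZ2 k0 mu mu1 z = shift z (if snd z \<ge> k0 then mu else mu1 (nat (snd z)))"

definition irreducible_on :: "kernel \<Rightarrow> state set \<Rightarrow> bool" where
  "irreducible_on K S \<longleftrightarrow>
     (\<forall>x\<in>S. \<forall>y\<in>S. (x, y) \<in> {(u, v). u \<in> S \<and> v \<in> S \<and> pmf (K u) v > 0}\<^sup>*)"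

text \<open>hitA K k N t w: starting at state w at some time s >= 1, the probability
  that the first coordinate does not equal k at times s, ..., s+t-1, equals k at
  time s+t, and the second coordinate at time s+t has absolute value >= N.\<close>
fun hitA :: "kernel \<Rightarrow> int \<Rightarrow> nat \<Rightarrow> nat \<Rightarrow> state \<Rightarrow> ennreal" where
  "hitA K k N 0 w = (if fst w = k \<and> \<bar>snd w\<bar> \<ge> int N then 1 else 0)"
| "hitA K k N (Suc t) w = (if fst w = k then 0
      else \<integral>\<^sup>+ v. hitA K k N t v \<partial>measure_pmf (K w))"

text \<open>P_z(T(k) < infinity and |Y(T(k))| >= N) where T(k) = inf{n > 0 : X(n) = k};
  the term t of the series is the probability that T(k) = t + 1.\<close>
definition prob_hit_Y_ge :: "kernel \<Rightarrow> int \<Rightarrow> nat \<Rightarrow> state \<Rightarrow> ennreal" where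
  "prob_hit_Y_ge K k N z = (\<Sum>t. \<integral>\<^sup>+ w. hitA K k N t w \<partial>measure_pmf (K z))"

end

theory Submission
  imports Defs
begin

fun hitG :: "('a \<Rightarrow> 'a pmf) \<Rightarrow> ('a \<Rightarrow> bool) \<Rightarrow> ('a \<Rightarrow> ennreal) \<Rightarrow> ennreal \<Rightarrow> nat \<Rightarrow> 'a \<Rightarrow> ennreal" where
  "hitG K A f l 0 w = (if A w then f w else 0)"
| "hitG K A f l (Suc t) w = (if A w then 0 else l * (\<integral>\<^sup>+ v. hitG K A f l t v \<partial>measure_pmf (K w)))"

definition Gr :: "('a \<Rightarrow> 'a pmf) \<Rightarrow> ('a \<Rightarrow> bool) \<Rightarrow> ('a \<Rightarrow> ennreal) \<Rightarrow> ennreal \<Rightarrow> 'a \<Rightarrow> ennreal" where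
  "Gr K A f l w = (\<Sum>t. hitG K A f l t w)"

lemma Gr_fix: "Gr K A f l w = (if A w then f w else l * (\<integral>\<^sup>+ v. Gr K A f l v \<partial>measure_pmf (K w)))"
proof -
  have "Gr K A f l w = (\<Sum>t. hitG K A f l (Suc t) w) + hitG K A f l 0 w"
    unfolding Gr_def using suminf_offset[of "\<lambda>t. hitG K A f l t w" 1] by (simp add: summableI)
  also have "(\<Sum>t. hitG K A f l (Suc t) w) = (if A w then 0 else l * (\<integral>\<^sup>+ v. Gr K A f l v \<partial>measure_pmf (K w)))"
  proof (cases "A w")
    case True then show ?thesis by simp
  next
    case False
    have "(\<Sum>t. hitG K A f l (Suc t) w) = (\<Sum>t. l * (\<integral>\<^sup>+ v. hitG K A f l t v \<partial>measure_pmf (K w)))"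
      using False by simp
    also have "\<dots> = l * (\<Sum>t. (\<integral>\<^sup>+ v. hitG K A f l t v \<partial>measure_pmf (K w)))" by simp
    also have "(\<Sum>t. (\<integral>\<^sup>+ v. hitG K A f l t v \<partial>measure_pmf (K w))) = (\<integral>\<^sup>+ v. Gr K A f l v \<partial>measure_pmf (K w))"
      unfolding Gr_def by (rule nn_integral_suminf[symmetric]) simp
    finally show ?thesis using False by simp
  qed
  finally show ?thesis by auto
qed

lemma Gr_le:
  assumes D: "\<And>w v. w \<in> D \<Longrightarrow> \<not> A w \<Longrightarrow> v \<in> set_pmf (K w) \<Longrightarrow> v \<in> D"
    and f: "\<And>w. w \<in> D \<Longrightarrow> A w \<Longrightarrow> f w \<le> V w"
    and V: "\<And>w. w \<in> D \<Longrightarrow> \<not> A w \<Longrightarrow> l * (\<integral>\<^sup>+ v. V v \<partial>measure_pmf (K w)) \<le> V w"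
    and w: "w \<in> D"
  shows "Gr K A f l w \<le> V w"
proof -
  have "\<forall>w\<in>D. (\<Sum>t<T. hitG K A f l t w) \<le> V w" for T
  proof (induction T)
    case 0 then show ?case by simp
  next
    case (Suc T)
    show ?case
    proof
      fix w assume wD: "w \<in> D"
      have eq: "(\<Sum>t<Suc T. hitG K A f l t w) = hitG K A f l 0 w + (\<Sum>t<T. hitG K A f l (Suc t) w)"
        by (rule sum.lessThan_Suc_shift)
      show "(\<Sum>t<Suc T. hitG K A f l t w) \<le> V w"
      proof (cases "A w")
        case True then show ?thesis unfolding eq using f[OF wD] by simp
      next
        case False
        have "(\<Sum>t<T. hitG K A f l (Suc t) w) = l * (\<Sum>t<T. (\<integral>\<^sup>+ v. hitG K A f l t v \<partial>measure_pmf (K w)))"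
          using False by (simp add: sum_distrib_left)
        also have "(\<Sum>t<T. (\<integral>\<^sup>+ v. hitG K A f l t v \<partial>measure_pmf (K w))) = (\<integral>\<^sup>+ v. (\<Sum>t<T. hitG K A f l t v) \<partial>measure_pmf (K w))"
          by (rule nn_integral_sum[symmetric]) simp
        also have "\<dots> \<le> (\<integral>\<^sup>+ v. V v \<partial>measure_pmf (K w))"
          by (rule nn_integral_mono_AE) (use Suc.IH D[OF wD False] in \<open>auto simp: AE_measure_pmf_iff\<close>)
        finally have "(\<Sum>t<T. hitG K A f l (Suc t) w) \<le> l * (\<integral>\<^sup>+ v. V v \<partial>measure_pmf (K w))"
          by (simp add: mult_left_mono)
        then show ?thesis unfolding eq using V[OF wD False] False by simp
      qed
    qed
  qed
  then show ?thesis unfolding Gr_def suminf_eq_SUP using w by (auto intro: SUP_least)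
qed

lemma hitG_scale: "hitG K A f l t w = l ^ t * hitG K A f 1 t w"
proof (induction t arbitrary: w)
  case 0 then show ?case by simp
next
  case (Suc t)
  have "(\<integral>\<^sup>+ v. hitG K A f l t v \<partial>measure_pmf (K w)) = l ^ t * (\<integral>\<^sup>+ v. hitG K A f 1 t v \<partial>measure_pmf (K w))"
    by (simp add: Suc.IH nn_integral_cmult)
  then show ?case by (simp add: mult.assoc)
qed

lemma hitG_sum: "hitG K A (\<lambda>w. \<Sum>e\<in>E. F e w) l t w = (\<Sum>e\<in>E. hitG K A (F e) l t w)"
proof (induction t arbitrary: w)
  case 0 then show ?case by simp
next
  case (Suc t)
  have "(\<integral>\<^sup>+ v. hitG K A (\<lambda>w. \<Sum>e\<in>E. F e w) l t v \<partial>measure_pmf (K w))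
     = (\<Sum>e\<in>E. (\<integral>\<^sup>+ v. hitG K A (F e) l t v \<partial>measure_pmf (K w)))"
    unfolding Suc.IH by (rule nn_integral_sum) simp
  then show ?case by (simp add: sum_distrib_left)
qed

lemma Gr_sum: "finite E \<Longrightarrow> Gr K A (\<lambda>w. \<Sum>e\<in>E. F e w) l w = (\<Sum>e\<in>E. Gr K A (F e) l w)"
  unfolding Gr_def hitG_sum by (rule suminf_sum) (simp add: summableI)

lemma hitG_mono_f: "(\<And>w. f w \<le> f' w) \<Longrightarrow> hitG K A f l t w \<le> hitG K A f' l t w"
proof (induction t arbitrary: w)
  case 0 then show ?case by simp
next
  case (Suc t)
  show ?case by (auto intro!: mult_left_mono nn_integral_mono Suc)
qed

lemma mom_from_A2:
  assumes k0: "k0 \<ge> (1::int)"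
    and A2: "\<forall>i j. i \<ge> 0 \<longrightarrow> j \<ge> 0 \<longrightarrow>
                 (\<integral>\<^sup>+ w. ennreal (exp (d * real_of_int (fst w - i) + g * real_of_int (snd w - j)))
                    \<partial>measure_pmf (kerZ k0 mu mu1 mu2 mu0 (i, j))) \<le> ennreal c"
  shows "(\<integral>\<^sup>+ ab. ennreal (exp (d * real_of_int (fst ab) + g * real_of_int (snd ab)))
            \<partial>measure_pmf (if x \<ge> k0 then mu else mu2 (nat x))) \<le> ennreal c"
proof (cases "x \<ge> k0")
  case True
  have "x \<ge> 0" "k0 \<ge> 0" using True k0 by auto
  with A2 have "(\<integral>\<^sup>+ w. ennreal (exp (d * real_of_int (fst w - x) + g * real_of_int (snd w - k0)))
                    \<partial>measure_pmf (kerZ k0 mu mu1 mu2 mu0 (x, k0))) \<le> ennreal c" by blast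
  then show ?thesis using True by (simp add: kerZ_def shift_def case_prod_beta)
next
  case False
  have "max x 0 \<ge> 0" "k0 \<ge> 0" using k0 by auto
  with A2 have "(\<integral>\<^sup>+ w. ennreal (exp (d * real_of_int (fst w - max x 0) + g * real_of_int (snd w - k0)))
                    \<partial>measure_pmf (kerZ k0 mu mu1 mu2 mu0 (max x 0, k0))) \<le> ennreal c" by blast
  moreover have "nat (max x 0) = nat x" by simp
  moreover have "\<not> max x 0 \<ge> k0" using False k0 by simp
  ultimately show ?thesis using False by (simp add: kerZ_def shift_def case_prod_beta)
qed

locale chain =
  fixes k0 :: int and mu :: "(int \<times> int) pmf" and mu2 :: "nat \<Rightarrow> (int \<times> int) pmf"
    and d g c :: real
  assumes k0: "k0 \<ge> 1"
    and A1_mu: "\<And>a b. a < - k0 \<or> b < - k0 \<Longrightarrow> pmf mu (a, b) = 0"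
    and A1_mu2: "\<And>i a b. int i < k0 \<Longrightarrow> b < - k0 \<or> a < - int i \<Longrightarrow> pmf (mu2 i) (a, b) = 0"
    and dgc: "d > 0" "g > 0" "c > 0"
    and mom0: "\<And>x. (\<integral>\<^sup>+ ab. ennreal (exp (d * real_of_int (fst ab) + g * real_of_int (snd ab)))
            \<partial>measure_pmf (if x \<ge> k0 then mu else mu2 (nat x))) \<le> ennreal c"
    and irr: "irreducible_on (kerZ1 k0 mu mu2) {z. fst z \<ge> 0}"
    and m1_neg: "measure_pmf.expectation mu (\<lambda>w. real_of_int (fst w)) < 0"
begin

definition m :: "int \<Rightarrow> (int \<times> int) pmf" where
  "m x = (if x \<ge> k0 then mu else mu2 (nat x))"

definition P :: "int \<Rightarrow> int pmf" where
  "P x = map_pmf (\<lambda>ab. x + fst ab) (m x)"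

abbreviation K where "K \<equiv> kerZ1 k0 mu mu2"

lemma K_eq: "K w = map_pmf (\<lambda>ab. (fst w + fst ab, snd w + snd ab)) (m (fst w))"
  unfolding kerZ1_def shift_def m_def by (simp add: case_prod_unfold)

lemma mom: "(\<integral>\<^sup>+ ab. ennreal (exp (d * real_of_int (fst ab) + g * real_of_int (snd ab))) \<partial>measure_pmf (m x)) \<le> ennreal c"
  using mom0[of x] unfolding m_def .

lemma supp_m:
  assumes "ab \<in> set_pmf (m x)"
  shows "fst ab \<ge> - k0" "snd ab \<ge> - k0" "x \<ge> 0 \<Longrightarrow> x + fst ab \<ge> 0"
proof -
  obtain a b where ab: "ab = (a, b)" by (cases ab)
  have pm: "pmf (m x) (a, b) \<noteq> 0" using assms ab by (simp add: set_pmf_iff)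
  have "a \<ge> - k0 \<and> b \<ge> - k0 \<and> (x \<ge> 0 \<longrightarrow> x + a \<ge> 0)"
  proof (cases "x \<ge> k0")
    case True
    then have "pmf mu (a, b) \<noteq> 0" using pm by (simp add: m_def)
    then have "\<not> (a < - k0 \<or> b < - k0)" using A1_mu by blast
    then show ?thesis using True by auto
  next
    case False
    then have p2: "pmf (mu2 (nat x)) (a, b) \<noteq> 0" using pm by (simp add: m_def)
    have "int (nat x) < k0" using False k0 by auto
    then have "\<not> (b < - k0 \<or> a < - int (nat x))" using A1_mu2 p2 by blast
    then show ?thesis using False k0 by (auto split: if_splits)
  qed
  then show "fst ab \<ge> - k0" "snd ab \<ge> - k0" "x \<ge> 0 \<Longrightarrow> x + fst ab \<ge> 0" using ab by auto
qed

lemma P_supp: "x \<ge> 0 \<Longrightarrow> v \<in> set_pmf (P x) \<Longrightarrow> v \<ge> 0"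
  unfolding P_def using supp_m(3) by auto

lemma int_P: "(\<integral>\<^sup>+ v. F v \<partial>measure_pmf (P x)) = (\<integral>\<^sup>+ ab. F (x + fst ab) \<partial>measure_pmf (m x))"
  unfolding P_def by simp

lemma int_K_fst: "(\<integral>\<^sup>+ v. F (fst v) \<partial>measure_pmf (K w)) = (\<integral>\<^sup>+ v. F v \<partial>measure_pmf (P (fst w)))"
  unfolding K_eq P_def by simp

lemma int_K: "(\<integral>\<^sup>+ v. F v \<partial>measure_pmf (K w)) = (\<integral>\<^sup>+ ab. F (fst w + fst ab, snd w + snd ab) \<partial>measure_pmf (m (fst w)))"
  unfolding K_eq by simp

end

context chain begin

definition "Mb = c * exp (g * k0) + 1"

lemma Mb_pos: "Mb > 0" unfolding Mb_def using dgc by (simp add: add_pos_pos)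

lemma exp_alpha_bound:
  assumes "0 \<le> \<alpha>" "\<alpha> \<le> d"
  shows "(\<integral>\<^sup>+ ab. ennreal (exp (\<alpha> * real_of_int (fst ab))) \<partial>measure_pmf (m x)) \<le> ennreal Mb"
proof -
  have "(\<integral>\<^sup>+ ab. ennreal (exp (\<alpha> * real_of_int (fst ab))) \<partial>measure_pmf (m x))
     \<le> (\<integral>\<^sup>+ ab. ennreal (exp (d * real_of_int (fst ab) + g * real_of_int (snd ab))) * ennreal (exp (g * k0)) + 1 \<partial>measure_pmf (m x))"
  proof (rule nn_integral_mono_AE, unfold AE_measure_pmf_iff, intro ballI)
    fix ab assume ab: "ab \<in> set_pmf (m x)"
    have b: "real_of_int (snd ab) \<ge> - k0" using supp_m(2)[OF ab] by simp
    have e1: "exp (d * real_of_int (fst ab)) \<le> exp (d * real_of_int (fst ab) + g * real_of_int (snd ab)) * exp (g * k0)"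
    proof -
      have "g * (real_of_int (snd ab) + k0) \<ge> 0" using b dgc by (intro mult_nonneg_nonneg) auto
      then have "g * real_of_int (snd ab) + g * k0 \<ge> 0" by (simp add: distrib_left)
      then show ?thesis by (simp add: exp_add[symmetric])
    qed
    have e2: "exp (\<alpha> * real_of_int (fst ab)) \<le> exp (d * real_of_int (fst ab)) + 1"
    proof (cases "fst ab \<ge> 0")
      case True
      then have "\<alpha> * real_of_int (fst ab) \<le> d * real_of_int (fst ab)" using assms by (simp add: mult_right_mono)
      then show ?thesis by (smt (verit) exp_gt_zero exp_le_cancel_iff)
    next
      case False
      then have "\<alpha> * real_of_int (fst ab) \<le> 0" using assms by (simp add: mult_nonneg_nonpos)
      then show ?thesis by (smt (verit) exp_gt_zero exp_le_one_iff)
    qed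
    show "ennreal (exp (\<alpha> * real_of_int (fst ab))) \<le> ennreal (exp (d * real_of_int (fst ab) + g * real_of_int (snd ab))) * ennreal (exp (g * k0)) + 1"
    proof -
      have "exp (\<alpha> * real_of_int (fst ab)) \<le> exp (d * real_of_int (fst ab) + g * real_of_int (snd ab)) * exp (g * k0) + 1"
        using e1 e2 by linarith
      then have "ennreal (exp (\<alpha> * real_of_int (fst ab))) \<le> ennreal (exp (d * real_of_int (fst ab) + g * real_of_int (snd ab)) * exp (g * k0) + 1)"
        by (rule ennreal_leI)
      then show ?thesis by (simp add: ennreal_mult'')
    qed
  qed
  also have "\<dots> = (\<integral>\<^sup>+ ab. ennreal (exp (d * real_of_int (fst ab) + g * real_of_int (snd ab))) \<partial>measure_pmf (m x)) * ennreal (exp (g * k0)) + 1"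
    by (subst nn_integral_add) (auto simp: nn_integral_multc)
  also have "\<dots> \<le> ennreal c * ennreal (exp (g * k0)) + 1"
    using mom[of x] by (intro add_mono mult_right_mono) auto
  also have "\<dots> = ennreal Mb" unfolding Mb_def using dgc by (simp add: ennreal_mult ennreal_plus)
  finally show ?thesis .
qed

lemma exp_gb_bound:
  "(\<integral>\<^sup>+ ab. ennreal (exp (g * real_of_int (snd ab))) \<partial>measure_pmf (m x)) \<le> ennreal (c * exp (d * k0))"
proof -
  have "(\<integral>\<^sup>+ ab. ennreal (exp (g * real_of_int (snd ab))) \<partial>measure_pmf (m x))
     \<le> (\<integral>\<^sup>+ ab. ennreal (exp (d * real_of_int (fst ab) + g * real_of_int (snd ab))) * ennreal (exp (d * k0)) \<partial>measure_pmf (m x))"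
  proof (rule nn_integral_mono_AE, unfold AE_measure_pmf_iff, intro ballI)
    fix ab assume ab: "ab \<in> set_pmf (m x)"
    have a: "real_of_int (fst ab) \<ge> - k0" using supp_m(1)[OF ab] by simp
    have "d * (real_of_int (fst ab) + k0) \<ge> 0" using a dgc by (intro mult_nonneg_nonneg) auto
    then have "d * real_of_int (fst ab) + d * k0 \<ge> 0" by (simp add: distrib_left)
    then have "exp (g * real_of_int (snd ab)) \<le> exp (d * real_of_int (fst ab) + g * real_of_int (snd ab)) * exp (d * k0)"
      by (simp add: exp_add[symmetric])
    then show "ennreal (exp (g * real_of_int (snd ab))) \<le> ennreal (exp (d * real_of_int (fst ab) + g * real_of_int (snd ab))) * ennreal (exp (d * k0))"
      by (simp add: ennreal_mult''[symmetric])
  qed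
  also have "\<dots> = (\<integral>\<^sup>+ ab. ennreal (exp (d * real_of_int (fst ab) + g * real_of_int (snd ab))) \<partial>measure_pmf (m x)) * ennreal (exp (d * k0))"
    by (auto simp: nn_integral_multc)
  also have "\<dots> \<le> ennreal c * ennreal (exp (d * k0))"
    using mom[of x] by (intro mult_right_mono) auto
  also have "\<dots> = ennreal (c * exp (d * k0))" using dgc by (simp add: ennreal_mult)
  finally show ?thesis .
qed

lemma exp_mgb_bound:
  "(\<integral>\<^sup>+ ab. ennreal (exp (- g * real_of_int (snd ab))) \<partial>measure_pmf (m x)) \<le> ennreal (exp (g * k0))"
proof -
  have "(\<integral>\<^sup>+ ab. ennreal (exp (- g * real_of_int (snd ab))) \<partial>measure_pmf (m x))
     \<le> (\<integral>\<^sup>+ ab. ennreal (exp (g * k0)) \<partial>measure_pmf (m x))"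
  proof (rule nn_integral_mono_AE, unfold AE_measure_pmf_iff, intro ballI)
    fix ab assume ab: "ab \<in> set_pmf (m x)"
    have b: "real_of_int (snd ab) \<ge> - k0" using supp_m(2)[OF ab] by simp
    have "g * (real_of_int (snd ab) + k0) \<ge> 0" using b dgc by (intro mult_nonneg_nonneg) auto
    then have "- g * real_of_int (snd ab) \<le> g * k0" by (simp add: distrib_left)
    then show "ennreal (exp (- g * real_of_int (snd ab))) \<le> ennreal (exp (g * k0))" by simp
  qed
  also have "\<dots> = ennreal (exp (g * k0))" by simp
  finally show ?thesis .
qed

end

lemma taylor_exp_bound:
  fixes \<alpha> d a k :: real
  assumes "0 \<le> \<alpha>" "\<alpha> \<le> d / 2" "d > 0" "a \<ge> - k" "k \<ge> 0"
  shows "exp (\<alpha> * a) \<le> 1 + \<alpha> * a + \<alpha>\<^sup>2 * ((4 / d\<^sup>2) * exp (d * a) + k\<^sup>2 * exp (d * k))"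
proof -
  obtain t where t: "\<bar>t\<bar> \<le> \<bar>\<alpha> * a\<bar>" and e: "exp (\<alpha> * a) = (\<Sum>m<2. (\<alpha> * a) ^ m / fact m) + exp t / fact 2 * (\<alpha> * a) ^ 2"
    using Maclaurin_exp_le[of "\<alpha> * a" 2] by blast
  have e': "exp (\<alpha> * a) = 1 + \<alpha> * a + exp t / 2 * (\<alpha>\<^sup>2 * a\<^sup>2)"
    using e by (simp add: numeral_2_eq_2 power_mult_distrib)
  have Q0: "0 \<le> (4 / d\<^sup>2) * exp (d * a)" "0 \<le> k\<^sup>2 * exp (d * k)" by auto
  show ?thesis
  proof (cases "a \<ge> 0")
    case True
    have "t \<le> \<alpha> * a" using t True assms by (simp add: abs_mult)
    also have "\<alpha> * a \<le> (d / 2) * a" using True assms by (intro mult_right_mono) auto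
    finally have et: "exp t \<le> exp (d * a / 2)" by simp
    have x: "(d * a / 2)\<^sup>2 \<le> 2 * exp (d * a / 2)"
    proof -
      have "0 \<le> d * a / 2" using True assms by simp
      then show ?thesis using exp_lower_Taylor_quadratic[of "d * a / 2"] by linarith
    qed
    have a2: "a\<^sup>2 \<le> 8 / d\<^sup>2 * exp (d * a / 2)"
    proof -
      have "(d * a / 2)\<^sup>2 = d\<^sup>2 * a\<^sup>2 / 4" by (simp add: power_mult_distrib power_divide)
      with x have "d\<^sup>2 * a\<^sup>2 \<le> 8 * exp (d * a / 2)" by simp
      then show ?thesis using assms by (simp add: field_simps)
    qed
    have "exp t / 2 * a\<^sup>2 \<le> exp (d * a / 2) / 2 * (8 / d\<^sup>2 * exp (d * a / 2))"
      using et a2 by (intro mult_mono divide_right_mono) auto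
    also have "\<dots> = (4 / d\<^sup>2) * (exp (d * a / 2) * exp (d * a / 2))" by simp
    also have "exp (d * a / 2) * exp (d * a / 2) = exp (d * a)" by (simp add: exp_add[symmetric])
    finally have "exp t / 2 * a\<^sup>2 \<le> (4 / d\<^sup>2) * exp (d * a) + k\<^sup>2 * exp (d * k)" using Q0 by linarith
    then have "\<alpha>\<^sup>2 * (exp t / 2 * a\<^sup>2) \<le> \<alpha>\<^sup>2 * ((4 / d\<^sup>2) * exp (d * a) + k\<^sup>2 * exp (d * k))"
      by (intro mult_left_mono) auto
    then show ?thesis using e' by (simp add: algebra_simps)
  next
    case False
    have "\<bar>\<alpha> * a\<bar> = \<alpha> * (- a)" using False assms by (simp add: abs_mult)
    also have "\<dots> \<le> d * k" using assms False by (intro mult_mono) auto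
    finally have "t \<le> d * k" using t by linarith
    then have et: "exp t \<le> exp (d * k)" by simp
    have "(- a)\<^sup>2 \<le> k\<^sup>2" using False assms by (intro power_mono) auto
    then have a2: "a\<^sup>2 \<le> k\<^sup>2" by simp
    have "exp t / 2 * a\<^sup>2 \<le> exp (d * k) * k\<^sup>2"
    proof -
      have "exp t / 2 * a\<^sup>2 \<le> exp t * a\<^sup>2" by simp
      also have "\<dots> \<le> exp (d * k) * k\<^sup>2" using et a2 by (intro mult_mono) auto
      finally show ?thesis .
    qed
    then have "exp t / 2 * a\<^sup>2 \<le> (4 / d\<^sup>2) * exp (d * a) + k\<^sup>2 * exp (d * k)" using Q0 by (simp only: mult.commute)
    then have "\<alpha>\<^sup>2 * (exp t / 2 * a\<^sup>2) \<le> \<alpha>\<^sup>2 * ((4 / d\<^sup>2) * exp (d * a) + k\<^sup>2 * exp (d * k))"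
      by (intro mult_left_mono) auto
    then show ?thesis using e' by (simp add: algebra_simps)
  qed
qed


context chain begin

definition "m1 = measure_pmf.expectation mu (\<lambda>w. real_of_int (fst w))"
definition "IQ = (4 / d\<^sup>2) * Mb + (real_of_int k0)\<^sup>2 * exp (d * k0)"
definition "alpha1 = min (d/2) (min (-1/m1) (-m1/(2*IQ)))"

lemma m1_neg': "m1 < 0" using m1_neg unfolding m1_def .

lemma mu_eq: "m k0 = mu" by (simp add: m_def)

lemma IQ_pos: "IQ > 0"
proof -
  have "Mb > 0" by (rule Mb_pos)
  moreover have "(real_of_int k0)\<^sup>2 > 0" using k0 by simp
  ultimately show ?thesis unfolding IQ_def using dgc by (intro add_pos_pos mult_pos_pos) auto
qed

lemma alpha1_pos: "alpha1 > 0"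
  unfolding alpha1_def using dgc m1_neg' IQ_pos by (auto simp: divide_pos_neg divide_neg_pos)

lemma nn_exp_d: "(\<integral>\<^sup>+ ab. ennreal (exp (d * real_of_int (fst ab))) \<partial>measure_pmf mu) \<le> ennreal Mb"
  using exp_alpha_bound[of d k0] dgc unfolding mu_eq by simp

lemma int_exp_d: "integrable (measure_pmf mu) (\<lambda>ab. exp (d * real_of_int (fst ab)))"
  by (rule integrableI_bounded) (use le_less_trans[OF nn_exp_d ennreal_less_top] in simp_all)

lemma int_exp_d_le: "measure_pmf.expectation mu (\<lambda>ab. exp (d * real_of_int (fst ab))) \<le> Mb"
proof -
  have "ennreal (measure_pmf.expectation mu (\<lambda>ab. exp (d * real_of_int (fst ab)))) \<le> ennreal Mb"
    using nn_exp_d nn_integral_eq_integral[OF int_exp_d] by simp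
  then show ?thesis using Mb_pos by (simp add: ennreal_le_iff)
qed

lemma int_fst: "integrable (measure_pmf mu) (\<lambda>ab. real_of_int (fst ab))"
proof (rule integrableI_bounded)
  have "(\<integral>\<^sup>+ ab. ennreal (norm (real_of_int (fst ab))) \<partial>measure_pmf mu)
      \<le> (\<integral>\<^sup>+ ab. ennreal (real_of_int k0) + ennreal (exp (d * real_of_int (fst ab))) * ennreal (1/d) \<partial>measure_pmf mu)"
  proof (rule nn_integral_mono_AE, unfold AE_measure_pmf_iff, intro ballI)
    fix ab assume ab: "ab \<in> set_pmf mu"
    then have a: "fst ab \<ge> - k0" using supp_m(1)[of ab k0] mu_eq by simp
    have "d * real_of_int (fst ab) \<le> exp (d * real_of_int (fst ab))"
      using exp_ge_add_one_self[of "d * real_of_int (fst ab)"] by linarith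
    then have "real_of_int (fst ab) \<le> exp (d * real_of_int (fst ab)) * (1/d)" using dgc by (simp add: field_simps)
    moreover have "exp (d * real_of_int (fst ab)) * (1/d) \<ge> 0" using dgc by simp
    ultimately have "norm (real_of_int (fst ab)) \<le> real_of_int k0 + exp (d * real_of_int (fst ab)) * (1/d)"
      using a k0 by (auto simp: abs_if)
    then have "ennreal (norm (real_of_int (fst ab))) \<le> ennreal (real_of_int k0 + exp (d * real_of_int (fst ab)) * (1/d))"
      by (rule ennreal_leI)
    also have "\<dots> = ennreal (real_of_int k0) + ennreal (exp (d * real_of_int (fst ab)) * (1/d))"
      using k0 dgc by (intro ennreal_plus) auto
    also have "ennreal (exp (d * real_of_int (fst ab)) * (1/d)) = ennreal (exp (d * real_of_int (fst ab))) * ennreal (1/d)"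
      using dgc by (intro ennreal_mult) auto
    finally show "ennreal (norm (real_of_int (fst ab))) \<le> ennreal (real_of_int k0) + ennreal (exp (d * real_of_int (fst ab))) * ennreal (1/d)" .
  qed
  also have "\<dots> = ennreal (real_of_int k0) + (\<integral>\<^sup>+ ab. ennreal (exp (d * real_of_int (fst ab))) \<partial>measure_pmf mu) * ennreal (1/d)"
    by (subst nn_integral_add) (auto simp: nn_integral_multc)
  also have "\<dots> < \<infinity>"
  proof -
    have "(\<integral>\<^sup>+ ab. ennreal (exp (d * real_of_int (fst ab))) \<partial>measure_pmf mu) < \<top>"
      using le_less_trans[OF nn_exp_d ennreal_less_top] .
    then show ?thesis by (simp add: ennreal_mult_less_top)
  qed
  finally show "(\<integral>\<^sup>+ ab. ennreal (norm (real_of_int (fst ab))) \<partial>measure_pmf mu) < \<infinity>" .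
qed simp

lemma drift:
  assumes a0: "0 < \<alpha>" and a1: "\<alpha> \<le> alpha1"
  shows "(\<integral>\<^sup>+ ab. ennreal (exp (\<alpha> * real_of_int (fst ab))) \<partial>measure_pmf mu) \<le> ennreal (1 + \<alpha> * m1 / 2)"
    and "1 + \<alpha> * m1 / 2 \<ge> 1/2"
proof -
  have ad: "\<alpha> \<le> d / 2" and am: "\<alpha> \<le> -1/m1" and aq: "\<alpha> \<le> -m1/(2*IQ)" using a1 unfolding alpha1_def by auto
  define Q where "Q ab = (4 / d\<^sup>2) * exp (d * real_of_int (fst ab)) + (real_of_int k0)\<^sup>2 * exp (d * k0)" for ab :: "int \<times> int"
  define F where "F ab = 1 + \<alpha> * real_of_int (fst ab) + \<alpha>\<^sup>2 * Q ab" for ab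
  have pt: "exp (\<alpha> * real_of_int (fst ab)) \<le> F ab" if "ab \<in> set_pmf mu" for ab
  proof -
    have "fst ab \<ge> - k0" using supp_m(1)[of ab k0] mu_eq that by simp
    then show ?thesis unfolding F_def Q_def
      using taylor_exp_bound[where \<alpha>=\<alpha> and d=d and a="real_of_int (fst ab)" and k="real_of_int k0"] a0 ad dgc k0 by simp
  qed
  have intQ: "integrable (measure_pmf mu) Q" unfolding Q_def using int_exp_d by simp
  have intF: "integrable (measure_pmf mu) F" unfolding F_def using int_fst intQ by simp
  have "(\<integral>\<^sup>+ ab. ennreal (exp (\<alpha> * real_of_int (fst ab))) \<partial>measure_pmf mu) \<le> (\<integral>\<^sup>+ ab. ennreal (F ab) \<partial>measure_pmf mu)"
    by (rule nn_integral_mono_AE) (auto simp: AE_measure_pmf_iff intro!: ennreal_leI pt)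
  also have "\<dots> = ennreal (measure_pmf.expectation mu F)"
    by (rule nn_integral_eq_integral[OF intF]) (auto simp: AE_measure_pmf_iff intro: order_trans[OF _ pt])
  also have "measure_pmf.expectation mu F = 1 + \<alpha> * m1 + \<alpha>\<^sup>2 * measure_pmf.expectation mu Q"
    unfolding F_def m1_def using int_fst intQ by simp
  also have "measure_pmf.expectation mu Q \<le> IQ"
    unfolding Q_def IQ_def using int_exp_d int_exp_d_le dgc by (simp add: divide_right_mono)
  then have "1 + \<alpha> * m1 + \<alpha>\<^sup>2 * measure_pmf.expectation mu Q \<le> 1 + \<alpha> * m1 / 2"
  proof -
    assume h: "measure_pmf.expectation mu Q \<le> IQ"
    have "\<alpha>\<^sup>2 * measure_pmf.expectation mu Q \<le> \<alpha>\<^sup>2 * IQ" using h by (intro mult_left_mono) auto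
    also have "\<alpha>\<^sup>2 * IQ = \<alpha> * (\<alpha> * IQ)" by (simp add: power2_eq_square)
    also have "\<alpha> * IQ \<le> - m1 / 2" using aq IQ_pos by (simp add: field_simps)
    then have "\<alpha> * (\<alpha> * IQ) \<le> \<alpha> * (- m1 / 2)" using a0 by (intro mult_left_mono) auto
    finally show ?thesis by (simp add: field_simps)
  qed
  then show "(\<integral>\<^sup>+ ab. ennreal (exp (\<alpha> * real_of_int (fst ab))) \<partial>measure_pmf mu) \<le> ennreal (1 + \<alpha> * m1 / 2)"
    using calculation by (meson ennreal_leI order_trans)
  have "\<alpha> * (- m1) \<le> 1" using am m1_neg' by (simp add: field_simps)
  then show "1 + \<alpha> * m1 / 2 \<ge> 1/2" by (simp add: algebra_simps)
qed

end

locale chaink = chain +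
  fixes k :: int
  assumes k_nonneg: "k \<ge> 0"
begin

definition "E = {0..<k0} \<union> {k}"
definition "B = E - {k}"
definition "H l e x = Gr P (\<lambda>x. x \<in> E) (\<lambda>x. if x = e then 1 else 0) l x"
definition "Am l x e = l * (\<integral>\<^sup>+ v. H l e v \<partial>measure_pmf (P x))"
definition "F l x = Gr P (\<lambda>x. x = k) (\<lambda>_. 1) l x"

lemma finE: "finite E" and finB: "finite B" and kE: "k \<in> E" and kB: "k \<notin> B"
  and B_sub: "B \<subseteq> {0..<k0}" and E_nonneg: "x \<in> E \<Longrightarrow> x \<ge> 0" and E_B: "E = insert k B"
  unfolding E_def B_def using k_nonneg by auto

lemma H_on_E: "x \<in> E \<Longrightarrow> H l e x = (if x = e then 1 else 0)"
  unfolding H_def by (subst Gr_fix) simp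

lemma notE: "x \<ge> 0 \<Longrightarrow> x \<notin> E \<Longrightarrow> x \<ge> k0 \<and> x \<noteq> k"
  unfolding E_def by auto

lemma P_mu: "x \<ge> k0 \<Longrightarrow> P x = map_pmf (\<lambda>ab. x + fst ab) mu"
  unfolding P_def m_def by simp

lemma sum_ind: "x \<in> E \<Longrightarrow> (\<Sum>e\<in>E. (if x = e then 1 else 0 :: ennreal)) = 1"
  using finE by (simp add: sum.delta)

lemma sum_H_Gr: "(\<Sum>e\<in>E. H l e x) = Gr P (\<lambda>x. x \<in> E) (\<lambda>x. \<Sum>e\<in>E. (if x = e then 1 else 0)) l x"
  unfolding H_def using Gr_sum[OF finE, of P "\<lambda>x. x \<in> E" "\<lambda>e x. if x = e then 1 else 0" l x] by simp

lemma outer_bound: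
  assumes a0: "0 < \<alpha>" and a1: "\<alpha> \<le> alpha1" and l0: "0 \<le> l" and lb: "l * (1 + \<alpha> * m1 / 2) \<le> 1"
    and x: "x \<ge> 0"
  shows "(\<Sum>e\<in>E. H (ennreal l) e x) \<le> ennreal (exp (\<alpha> * x))"
  unfolding sum_H_Gr
proof (rule Gr_le[where D="{x. x \<ge> 0}"])
  show "x \<in> {x. x \<ge> 0}" using x by simp
  show "v \<in> {x. 0 \<le> x}" if "w \<in> {x. 0 \<le> x}" "v \<in> set_pmf (P w)" for w v using P_supp that by auto
  show "(\<Sum>e\<in>E. (if w = e then 1 else 0)) \<le> ennreal (exp (\<alpha> * w))" if "w \<in> {x. 0 \<le> x}" "w \<in> E" for w
    using that a0 by (simp add: sum_ind)
  show "ennreal l * (\<integral>\<^sup>+ v. ennreal (exp (\<alpha> * v)) \<partial>measure_pmf (P w)) \<le> ennreal (exp (\<alpha> * w))"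
    if "w \<in> {x. 0 \<le> x}" "w \<notin> E" for w
  proof -
    have wk: "w \<ge> k0" using notE that by auto
    have "(\<integral>\<^sup>+ v. ennreal (exp (\<alpha> * v)) \<partial>measure_pmf (P w))
        = (\<integral>\<^sup>+ ab. ennreal (exp (\<alpha> * w)) * ennreal (exp (\<alpha> * real_of_int (fst ab))) \<partial>measure_pmf mu)"
      unfolding P_mu[OF wk] by (simp add: distrib_left exp_add ennreal_mult'')
    also have "\<dots> = ennreal (exp (\<alpha> * w)) * (\<integral>\<^sup>+ ab. ennreal (exp (\<alpha> * real_of_int (fst ab))) \<partial>measure_pmf mu)"
      by (simp add: nn_integral_cmult)
    also have "\<dots> \<le> ennreal (exp (\<alpha> * w)) * ennreal (1 + \<alpha> * m1 / 2)"
      using drift(1)[OF a0 a1] by (intro mult_left_mono) auto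
    finally have "ennreal l * (\<integral>\<^sup>+ v. ennreal (exp (\<alpha> * v)) \<partial>measure_pmf (P w))
        \<le> ennreal l * (ennreal (exp (\<alpha> * w)) * ennreal (1 + \<alpha> * m1 / 2))"
      by (intro mult_left_mono) auto
    also have "\<dots> = ennreal (exp (\<alpha> * w) * (l * (1 + \<alpha> * m1 / 2)))"
      using drift(2)[OF a0 a1] l0 by (simp add: ennreal_mult[symmetric] mult_ac)
    also have "\<dots> \<le> ennreal (exp (\<alpha> * w))"
      using lb drift(2)[OF a0 a1] l0 by (intro ennreal_leI) (simp add: mult_left_le)
    finally show ?thesis .
  qed
qed

lemma sum_H1: "x \<ge> 0 \<Longrightarrow> (\<Sum>e\<in>E. H 1 e x) \<le> 1"
  unfolding sum_H_Gr
proof (rule Gr_le[where D="{x. x \<ge> 0}"])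
  show "v \<in> {x. 0 \<le> x}" if "w \<in> {x. 0 \<le> x}" "v \<in> set_pmf (P w)" for w v using P_supp that by auto
qed (auto simp: sum_ind)

end

fun piF :: "('i \<Rightarrow> 'i \<Rightarrow> real) \<Rightarrow> ('i \<Rightarrow> real) \<Rightarrow> 'i set \<Rightarrow> nat \<Rightarrow> 'i \<Rightarrow> real" where
  "piF M a B 0 x = 0"
| "piF M a B (Suc j) x = a x + (\<Sum>e\<in>B. M x e * piF M a B j e)"

fun uF :: "('i \<Rightarrow> 'i \<Rightarrow> real) \<Rightarrow> 'i set \<Rightarrow> nat \<Rightarrow> 'i \<Rightarrow> real" where
  "uF M B 0 x = 1"
| "uF M B (Suc j) x = (\<Sum>e\<in>B. M x e * uF M B j e)"

context
  fixes B :: "'i set" and M1 :: "'i \<Rightarrow> 'i \<Rightarrow> real" and a1 :: "'i \<Rightarrow> real"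
  assumes finB: "finite B"
    and M1nn: "\<And>x e. x \<in> B \<Longrightarrow> e \<in> B \<Longrightarrow> M1 x e \<ge> 0"
    and a1nn: "\<And>x. x \<in> B \<Longrightarrow> a1 x \<ge> 0"
    and rows: "\<And>x. x \<in> B \<Longrightarrow> (\<Sum>e\<in>B. M1 x e) + a1 x \<le> 1"
begin

lemma pi_nonneg: "x \<in> B \<Longrightarrow> piF M1 a1 B j x \<ge> 0"
  by (induction j arbitrary: x) (auto intro!: add_nonneg_nonneg sum_nonneg mult_nonneg_nonneg M1nn a1nn)

lemma pi_Suc: "x \<in> B \<Longrightarrow> piF M1 a1 B j x \<le> piF M1 a1 B (Suc j) x"
proof (induction j arbitrary: x)
  case 0 then show ?case by (simp add: a1nn)
next
  case (Suc j)
  have "(\<Sum>e\<in>B. M1 x e * piF M1 a1 B j e) \<le> (\<Sum>e\<in>B. M1 x e * piF M1 a1 B (Suc j) e)"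
    by (intro sum_mono mult_left_mono Suc.IH M1nn Suc.prems)
  then show ?case by simp
qed

lemma pi_mono: "x \<in> B \<Longrightarrow> j \<le> j' \<Longrightarrow> piF M1 a1 B j x \<le> piF M1 a1 B j' x"
  using lift_Suc_mono_le[of "\<lambda>j. piF M1 a1 B j x"] pi_Suc by blast

lemma u1_pi: "x \<in> B \<Longrightarrow> uF M1 B j x + piF M1 a1 B j x \<le> 1 \<and> uF M1 B j x \<ge> 0"
proof (induction j arbitrary: x)
  case 0 then show ?case by simp
next
  case (Suc j)
  have "uF M1 B (Suc j) x + piF M1 a1 B (Suc j) x = (\<Sum>e\<in>B. M1 x e * (uF M1 B j e + piF M1 a1 B j e)) + a1 x"
    by (simp add: distrib_left sum.distrib)
  also have "\<dots> \<le> (\<Sum>e\<in>B. M1 x e * 1) + a1 x"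
    using Suc.IH by (intro add_mono sum_mono mult_left_mono M1nn Suc.prems) auto
  also have "\<dots> \<le> 1" using rows[OF Suc.prems] by simp
  finally show ?case using Suc.IH by (auto intro!: sum_nonneg mult_nonneg_nonneg M1nn Suc.prems)
qed

lemma finite_trick:
  assumes reach: "\<And>x. x \<in> B \<Longrightarrow> \<exists>j. piF M1 a1 B j x > 0" and K0: "K0 \<ge> 0"
  shows "\<exists>\<eta>0>0. \<forall>\<eta> M a. 0 \<le> \<eta> \<and> \<eta> \<le> \<eta>0 \<and> (\<forall>x\<in>B. \<forall>e\<in>B. 0 \<le> M x e \<and> M x e \<le> M1 x e + \<eta> * K0)
      \<and> (\<forall>x\<in>B. 0 \<le> a x \<and> a x \<le> a1 x + \<eta> * K0) \<longrightarrow>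
      (\<exists>v. (\<forall>x\<in>B. 0 \<le> v x) \<and> (\<forall>x\<in>B. (\<Sum>e\<in>B. M x e * v e) + a x \<le> v x))"
proof (cases "B = {}")
  case True then show ?thesis by (intro exI[of _ 1]) auto
next
  case Bne: False
  obtain jx where jx: "\<And>x. x \<in> B \<Longrightarrow> piF M1 a1 B (jx x) x > 0" using reach by metis
  define J where "J = Max (jx ` B)"
  have jJ: "x \<in> B \<Longrightarrow> jx x \<le> J" for x unfolding J_def using finB by auto
  have piJ: "x \<in> B \<Longrightarrow> piF M1 a1 B J x > 0" for x
    using jx[of x] pi_mono[of x "jx x" J] jJ[of x] by linarith
  define p where "p = Min ((\<lambda>x. piF M1 a1 B J x) ` B)"
  have p_pos: "p > 0" unfolding p_def using finB Bne piJ by auto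
  have p_le: "x \<in> B \<Longrightarrow> p \<le> piF M1 a1 B J x" for x unfolding p_def using finB by auto
  have p1: "p \<le> 1"
  proof -
    obtain x where "x \<in> B" using Bne by auto
    then show ?thesis using p_le[of x] u1_pi[of x J] by linarith
  qed
  define R where "R = 1 + 2 * real (card B) * K0"
  have R1: "R \<ge> 1" unfolding R_def using K0 by simp
  define \<eta>0 where "\<eta>0 = p / (2 * R ^ J)"
  have RJ: "R ^ J \<ge> 1" using R1 by (simp add: one_le_power)
  have \<eta>0_pos: "\<eta>0 > 0" unfolding \<eta>0_def using p_pos RJ by simp
  have \<eta>0_1: "\<eta>0 \<le> 1" unfolding \<eta>0_def using p1 RJ p_pos by (simp add: field_simps)
  show ?thesis
  proof (intro exI[of _ \<eta>0] conjI \<eta>0_pos allI impI)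
    fix \<eta> M a
    assume h: "0 \<le> \<eta> \<and> \<eta> \<le> \<eta>0 \<and> (\<forall>x\<in>B. \<forall>e\<in>B. 0 \<le> M x e \<and> M x e \<le> M1 x e + \<eta> * K0)
      \<and> (\<forall>x\<in>B. 0 \<le> a x \<and> a x \<le> a1 x + \<eta> * K0)"
    then have \<eta>: "0 \<le> \<eta>" "\<eta> \<le> \<eta>0" and Mb: "\<And>x e. x \<in> B \<Longrightarrow> e \<in> B \<Longrightarrow> 0 \<le> M x e \<and> M x e \<le> M1 x e + \<eta> * K0"
      and ab: "\<And>x. x \<in> B \<Longrightarrow> 0 \<le> a x \<and> a x \<le> a1 x + \<eta> * K0" by auto
    have \<eta>1: "\<eta> \<le> 1" using \<eta> \<eta>0_1 by linarith
    have u_bound: "x \<in> B \<Longrightarrow> uF M B j x \<le> uF M1 B j x + \<eta> * R ^ j \<and> 0 \<le> uF M B j x" for x j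
    proof (induction j arbitrary: x)
      case 0 then show ?case using \<eta> by simp
    next
      case (Suc j)
      have Rj: "R ^ j \<ge> 1" using R1 by (simp add: one_le_power)
      have trm: "M x e * uF M B j e \<le> M1 x e * uF M1 B j e + M1 x e * (\<eta> * R ^ j) + \<eta> * K0 * (1 + R ^ j)"
        if e: "e \<in> B" for e
      proof -
        have u1: "uF M1 B j e \<le> 1" "uF M1 B j e \<ge> 0" using u1_pi[OF e, of j] pi_nonneg[OF e, of j] by auto
        have "M x e * uF M B j e \<le> (M1 x e + \<eta> * K0) * (uF M1 B j e + \<eta> * R ^ j)"
          using Mb[OF Suc.prems e] Suc.IH[OF e] by (intro mult_mono) auto
        also have "\<dots> = M1 x e * uF M1 B j e + M1 x e * (\<eta> * R ^ j) + \<eta> * K0 * (uF M1 B j e + \<eta> * R ^ j)"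
          by (simp add: algebra_simps)
        also have "\<eta> * K0 * (uF M1 B j e + \<eta> * R ^ j) \<le> \<eta> * K0 * (1 + R ^ j)"
        proof -
          have "\<eta> * R ^ j \<le> 1 * R ^ j" using \<eta>1 Rj by (intro mult_right_mono) auto
          then show ?thesis using u1 \<eta> K0 by (intro mult_left_mono) auto
        qed
        finally show ?thesis by linarith
      qed
      have "uF M B (Suc j) x \<le> (\<Sum>e\<in>B. M1 x e * uF M1 B j e + M1 x e * (\<eta> * R ^ j) + \<eta> * K0 * (1 + R ^ j))"
        using trm by (simp add: sum_mono)
      also have "\<dots> = uF M1 B (Suc j) x + (\<Sum>e\<in>B. M1 x e) * (\<eta> * R ^ j) + real (card B) * (\<eta> * K0 * (1 + R ^ j))"
        by (simp add: sum.distrib sum_distrib_right)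
      also have "(\<Sum>e\<in>B. M1 x e) * (\<eta> * R ^ j) \<le> 1 * (\<eta> * R ^ j)"
        using rows[OF Suc.prems] a1nn[OF Suc.prems] \<eta> Rj by (intro mult_right_mono) auto
      also have "real (card B) * (\<eta> * K0 * (1 + R ^ j)) \<le> real (card B) * (\<eta> * K0 * (2 * R ^ j))"
        using Rj \<eta> K0 by (intro mult_left_mono) auto
      finally have "uF M B (Suc j) x \<le> uF M1 B (Suc j) x + \<eta> * R ^ j * (1 + 2 * real (card B) * K0)"
        by (simp add: algebra_simps)
      then have le: "uF M B (Suc j) x \<le> uF M1 B (Suc j) x + \<eta> * R ^ Suc j" unfolding R_def by (simp add: mult_ac)
      have "0 \<le> uF M B (Suc j) x" using Mb Suc.IH Suc.prems by (auto intro!: sum_nonneg mult_nonneg_nonneg)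
      with le show ?case by simp
    qed
    have uJ: "x \<in> B \<Longrightarrow> uF M B J x \<le> 1 - p / 2" for x
    proof -
      assume x: "x \<in> B"
      have "\<eta> * R ^ J \<le> \<eta>0 * R ^ J" using \<eta> RJ by (intro mult_right_mono) auto
      also have "\<eta>0 * R ^ J = p / 2"
      proof -
        have "R ^ J \<noteq> 0" using RJ by linarith
        then show ?thesis unfolding \<eta>0_def by (simp add: field_simps)
      qed
      finally show ?thesis using u_bound[OF x, of J] u1_pi[OF x, of J] p_le[OF x] by linarith
    qed
    define cc where "cc = 2 * (1 + K0) / p"
    have cc_pos: "cc \<ge> 0" unfolding cc_def using p_pos K0 by simp
    have ccp: "cc * (p / 2) = 1 + K0" unfolding cc_def using p_pos by simp
    define v where "v x = cc * (\<Sum>j<J. uF M B j x)" for x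
    show "\<exists>v. (\<forall>x\<in>B. 0 \<le> v x) \<and> (\<forall>x\<in>B. (\<Sum>e\<in>B. M x e * v e) + a x \<le> v x)"
    proof (intro exI[of _ v] conjI ballI)
      fix x assume x: "x \<in> B"
      show "0 \<le> v x" unfolding v_def using cc_pos u_bound[OF x] by (auto intro!: sum_nonneg mult_nonneg_nonneg)
      have "(\<Sum>e\<in>B. M x e * v e) = cc * (\<Sum>j<J. uF M B (Suc j) x)"
        unfolding v_def by (simp add: sum_distrib_left sum.swap[of _ B] mult_ac)
      also have "(\<Sum>j<J. uF M B (Suc j) x) = (\<Sum>j<J. uF M B j x) + uF M B J x - 1"
        using sum.lessThan_Suc_shift[of "\<lambda>j. uF M B j x" J] by (simp add: sum.lessThan_Suc)
      finally have "(\<Sum>e\<in>B. M x e * v e) = v x + cc * (uF M B J x - 1)"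
        unfolding v_def by (simp add: algebra_simps)
      also have "cc * (uF M B J x - 1) \<le> cc * (- (p / 2))" using uJ[OF x] cc_pos by (intro mult_left_mono) auto
      finally have "(\<Sum>e\<in>B. M x e * v e) \<le> v x - cc * (p / 2)" by simp
      then have "(\<Sum>e\<in>B. M x e * v e) \<le> v x - (1 + K0)" unfolding ccp .
      moreover have "a x \<le> 1 + K0"
      proof -
        have "a1 x \<le> 1" using rows[OF x] M1nn[OF x] by (smt (verit) sum_nonneg)
        moreover have "\<eta> * K0 \<le> 1 * K0" using \<eta>1 K0 by (intro mult_right_mono) auto
        ultimately show ?thesis using ab[OF x] by linarith
      qed
      ultimately show "(\<Sum>e\<in>B. M x e * v e) + a x \<le> v x" by linarith
    qed
  qed
qed

end

lemma nn_integral_pmf_lower: "ennreal (pmf M v) * f v \<le> (\<integral>\<^sup>+ z. f z \<partial>measure_pmf M)"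
proof -
  have "(\<integral>\<^sup>+ z. f v * indicator {v} z \<partial>measure_pmf M) \<le> (\<integral>\<^sup>+ z. f z \<partial>measure_pmf M)"
    by (intro nn_integral_mono) (auto split: split_indicator)
  moreover have "(\<integral>\<^sup>+ z. f v * indicator {v} z \<partial>measure_pmf M) = f v * ennreal (pmf M v)"
    by (simp add: nn_integral_cmult_indicator emeasure_pmf_single)
  ultimately show ?thesis by (simp add: mult.commute)
qed

lemma pow_interp:
  fixes l l0 :: real
  assumes "1 \<le> l" "l \<le> l0" "1 < l0"
  shows "l ^ n \<le> 1 + (l - 1) / (l0 - 1) * l0 ^ n"
proof -
  have "l ^ n - 1 = (l - 1) * (\<Sum>i<n. l ^ i)" by (rule power_diff_1_eq)
  also have "\<dots> \<le> (l - 1) * (\<Sum>i<n. l0 ^ i)"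
    using assms by (intro mult_left_mono sum_mono power_mono) auto
  also have "(\<Sum>i<n. l0 ^ i) = (l0 ^ n - 1) / (l0 - 1)"
    using power_diff_1_eq[of l0 n] assms by (simp add: field_simps)
  also have "(l - 1) * ((l0 ^ n - 1) / (l0 - 1)) = (l - 1) / (l0 - 1) * (l0 ^ n - 1)" by simp
  also have "\<dots> \<le> (l - 1) / (l0 - 1) * l0 ^ n" using assms by (intro mult_left_mono) auto
  finally show ?thesis by simp
qed

context chaink begin

lemma V_super:
  assumes wk: "w k \<ge> 1" and wB: "\<And>x. x \<in> B \<Longrightarrow> (\<Sum>e\<in>E. Am l x e * w e) \<le> w x" and x: "x \<ge> 0"
  shows "F l x \<le> (\<Sum>e\<in>E. H l e x * w e)"
  unfolding F_def
proof (rule Gr_le[where D="{x. x \<ge> 0}"])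
  show "x \<in> {x. 0 \<le> x}" using x by simp
  show "v \<in> {x. 0 \<le> x}" if "u \<in> {x. 0 \<le> x}" "v \<in> set_pmf (P u)" for u v using P_supp that by auto
  have onE: "(\<Sum>e\<in>E. H l e u * w e) = w u" if "u \<in> E" for u
  proof -
    have "(\<Sum>e\<in>E. H l e u * w e) = (\<Sum>e\<in>E. (if u = e then w e else 0))" using H_on_E[OF that] by (intro sum.cong) auto
    also have "\<dots> = w u" using finE that by simp
    finally show ?thesis .
  qed
  show "1 \<le> (\<Sum>e\<in>E. H l e u * w e)" if "u \<in> {x. 0 \<le> x}" "u = k" for u
    using onE[OF kE] wk that by simp
  show "l * (\<integral>\<^sup>+ v. (\<Sum>e\<in>E. H l e v * w e) \<partial>measure_pmf (P u)) \<le> (\<Sum>e\<in>E. H l e u * w e)"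
    if "u \<in> {x. 0 \<le> x}" "u \<noteq> k" for u
  proof -
    have eq: "l * (\<integral>\<^sup>+ v. (\<Sum>e\<in>E. H l e v * w e) \<partial>measure_pmf (P u)) = (\<Sum>e\<in>E. Am l u e * w e)"
      unfolding Am_def by (subst nn_integral_sum) (auto simp: nn_integral_multc nn_integral_cmult sum_distrib_left mult_ac)
    show ?thesis
    proof (cases "u \<in> E")
      case True
      then have uB: "u \<in> B" using that unfolding B_def by auto
      then show ?thesis using eq wB[OF uB] onE[OF True] by simp
    next
      case False
      have "Am l u e = H l e u" for e unfolding Am_def H_def by (subst Gr_fix[of P _ _ l u]) (simp add: False)
      then show ?thesis using eq by simp
    qed
  qed
qed

lemma F1_pos:
  assumes x: "x \<ge> 0" shows "F 1 x > 0"
proof -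
  let ?S = "{z::int\<times>int. fst z \<ge> 0}"
  let ?R = "{(u, v). u \<in> ?S \<and> v \<in> ?S \<and> pmf (K u) v > 0}"
  have "((x,0),(k,0)) \<in> ?R\<^sup>*" using irr x k_nonneg unfolding irreducible_on_def by auto
  moreover have "(u, (k,0)) \<in> ?R\<^sup>* \<Longrightarrow> F 1 (fst u) > 0" for u
  proof (induction rule: converse_rtrancl_induct)
    case base show ?case unfolding F_def by (subst Gr_fix) simp
  next
    case (step u v)
    from step.hyps(1) have pos: "pmf (K u) v > 0" by auto
    show ?case
    proof (cases "fst u = k")
      case True then show ?thesis unfolding F_def by (subst Gr_fix) simp
    next
      case False
      have "F 1 (fst u) = (\<integral>\<^sup>+ z. F 1 z \<partial>measure_pmf (P (fst u)))" unfolding F_def by (subst Gr_fix) (simp add: False)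
      also have "\<dots> = (\<integral>\<^sup>+ z. F 1 (fst z) \<partial>measure_pmf (K u))" by (rule int_K_fst[symmetric])
      finally have "ennreal (pmf (K u) v) * F 1 (fst v) \<le> F 1 (fst u)"
        using nn_integral_pmf_lower[of "K u" v "\<lambda>z. F 1 (fst z)"] by simp
      moreover have "0 < ennreal (pmf (K u) v) * F 1 (fst v)" using pos step.IH by (simp add: ennreal_zero_less_mult_iff)
      ultimately show ?thesis by (meson less_le_trans)
    qed
  qed
  ultimately show ?thesis by fastforce
qed

lemma Am_series:
  "Am (ennreal l) x e = (\<Sum>t. ennreal (l ^ Suc t) * (\<integral>\<^sup>+ v. hitG P (\<lambda>x. x \<in> E) (\<lambda>x. if x = e then 1 else 0) 1 t v \<partial>measure_pmf (P x)))"
  if "l \<ge> 0"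
proof -
  have "Am (ennreal l) x e = ennreal l * (\<Sum>t. (\<integral>\<^sup>+ v. ennreal l ^ t * hitG P (\<lambda>x. x \<in> E) (\<lambda>x. if x = e then 1 else 0) 1 t v \<partial>measure_pmf (P x)))"
    unfolding Am_def H_def Gr_def hitG_scale[of P _ _ "ennreal l"] by (subst nn_integral_suminf) auto
  also have "\<dots> = (\<Sum>t. ennreal l * (ennreal l ^ t * (\<integral>\<^sup>+ v. hitG P (\<lambda>x. x \<in> E) (\<lambda>x. if x = e then 1 else 0) 1 t v \<partial>measure_pmf (P x))))"
    by (simp add: nn_integral_cmult)
  also have "\<dots> = (\<Sum>t. ennreal (l ^ Suc t) * (\<integral>\<^sup>+ v. hitG P (\<lambda>x. x \<in> E) (\<lambda>x. if x = e then 1 else 0) 1 t v \<partial>measure_pmf (P x)))"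
    using that by (simp add: ennreal_power ennreal_mult mult_ac)
  finally show ?thesis .
qed

lemma Am_interp:
  assumes "1 \<le> l" "l \<le> l0" "1 < l0"
  shows "Am (ennreal l) x e \<le> Am 1 x e + ennreal ((l - 1) / (l0 - 1)) * Am (ennreal l0) x e"
proof -
  define I where "I t = (\<integral>\<^sup>+ v. hitG P (\<lambda>x. x \<in> E) (\<lambda>x. if x = e then 1 else 0) 1 t v \<partial>measure_pmf (P x))" for t
  define \<eta> where "\<eta> = (l - 1) / (l0 - 1)"
  have \<eta>0: "\<eta> \<ge> 0" unfolding \<eta>_def using assms by simp
  have "Am (ennreal l) x e = (\<Sum>t. ennreal (l ^ Suc t) * I t)" unfolding I_def using Am_series[of l] assms by simp
  also have "\<dots> \<le> (\<Sum>t. I t + ennreal \<eta> * (ennreal (l0 ^ Suc t) * I t))"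
  proof (intro suminf_le allI)
    fix t
    have "ennreal (l ^ Suc t) \<le> ennreal (1 + \<eta> * l0 ^ Suc t)"
      unfolding \<eta>_def by (intro ennreal_leI pow_interp assms)
    also have "\<dots> = 1 + ennreal \<eta> * ennreal (l0 ^ Suc t)" using \<eta>0 assms by (simp add: ennreal_mult ennreal_plus)
    finally have "ennreal (l ^ Suc t) * I t \<le> (1 + ennreal \<eta> * ennreal (l0 ^ Suc t)) * I t" by (rule mult_right_mono) simp
    also have "(1 + ennreal \<eta> * ennreal (l0 ^ Suc t)) * I t = I t + ennreal \<eta> * (ennreal (l0 ^ Suc t) * I t)"
      by (simp add: distrib_right mult.assoc)
    finally show "ennreal (l ^ Suc t) * I t \<le> I t + ennreal \<eta> * (ennreal (l0 ^ Suc t) * I t)" .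
  qed (auto simp: summableI)
  also have "\<dots> = (\<Sum>t. I t) + ennreal \<eta> * (\<Sum>t. ennreal (l0 ^ Suc t) * I t)"
    by (subst suminf_add[symmetric]) (auto simp: summableI)
  also have "(\<Sum>t. I t) = Am 1 x e" unfolding I_def using Am_series[of 1] by simp
  also have "(\<Sum>t. ennreal (l0 ^ Suc t) * I t) = Am (ennreal l0) x e" unfolding I_def using Am_series[of l0] assms by simp
  finally show ?thesis unfolding \<eta>_def .
qed

lemma row_Am1: "x \<ge> 0 \<Longrightarrow> (\<Sum>e\<in>E. Am 1 x e) \<le> 1"
proof -
  assume x: "x \<ge> 0"
  have "(\<Sum>e\<in>E. Am 1 x e) = (\<integral>\<^sup>+ v. (\<Sum>e\<in>E. H 1 e v) \<partial>measure_pmf (P x))"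
    unfolding Am_def by (subst nn_integral_sum) auto
  also have "\<dots> \<le> (\<integral>\<^sup>+ v. 1 \<partial>measure_pmf (P x))"
    by (rule nn_integral_mono_AE) (use sum_H1 P_supp[OF x] in \<open>auto simp: AE_measure_pmf_iff\<close>)
  finally show ?thesis by simp
qed

lemma Am1_le: "x \<ge> 0 \<Longrightarrow> e \<in> E \<Longrightarrow> Am 1 x e \<le> 1"
  using row_Am1[of x] member_le_sum[of e E "Am 1 x"] finE by (meson order_trans zero_le)

definition "M1 x e = enn2real (Am 1 x e)"
definition "a1 x = enn2real (Am 1 x k)"

lemma Am1_eq: "x \<ge> 0 \<Longrightarrow> e \<in> E \<Longrightarrow> Am 1 x e = ennreal (M1 x e)"
  unfolding M1_def using Am1_le[of x e] by (simp add: ennreal_enn2real_if top_unique) (metis ennreal_enn2real ennreal_one_neq_top neq_top_trans)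

end

context chaink begin

lemma M1nn: "x \<in> B \<Longrightarrow> e \<in> B \<Longrightarrow> M1 x e \<ge> 0" unfolding M1_def by simp
lemma a1nn: "x \<in> B \<Longrightarrow> a1 x \<ge> 0" unfolding a1_def by simp
lemma B_nonneg: "x \<in> B \<Longrightarrow> x \<ge> 0" using B_sub by auto
lemma B_E: "x \<in> B \<Longrightarrow> x \<in> E" unfolding B_def by auto

lemma rows: "x \<in> B \<Longrightarrow> (\<Sum>e\<in>B. M1 x e) + a1 x \<le> 1"
proof -
  assume x: "x \<in> B"
  have "(\<Sum>e\<in>E. Am 1 x e) = Am 1 x k + (\<Sum>e\<in>B. Am 1 x e)" unfolding E_B using finB kB by simp
  also have "\<dots> = ennreal (a1 x) + (\<Sum>e\<in>B. ennreal (M1 x e))"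
    using Am1_eq[OF B_nonneg[OF x]] kE B_E unfolding a1_def by (intro arg_cong2[where f="(+)"] sum.cong) auto
  also have "\<dots> = ennreal ((\<Sum>e\<in>B. M1 x e) + a1 x)"
    by (simp add: sum_ennreal M1nn[OF x] a1nn[OF x] sum_nonneg ennreal_plus add.commute)
  finally have "ennreal ((\<Sum>e\<in>B. M1 x e) + a1 x) \<le> 1" using row_Am1[OF B_nonneg[OF x]] by simp
  then show ?thesis using ennreal_le_1 by blast
qed

lemma sum_H_onE: "x \<in> E \<Longrightarrow> (\<Sum>e\<in>E. H l e x * w e) = w x"
proof -
  assume x: "x \<in> E"
  have "(\<Sum>e\<in>E. H l e x * w e) = (\<Sum>e\<in>E. (if x = e then w e else 0))" using H_on_E[OF x] by (intro sum.cong) auto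
  also have "\<dots> = w x" using finE x by simp
  finally show ?thesis .
qed

lemma fin_facts: "finite B" "\<And>x e. x \<in> B \<Longrightarrow> e \<in> B \<Longrightarrow> M1 x e \<ge> 0" "\<And>x. x \<in> B \<Longrightarrow> a1 x \<ge> 0"
  "\<And>x. x \<in> B \<Longrightarrow> (\<Sum>e\<in>B. M1 x e) + a1 x \<le> 1"
  using finB M1nn a1nn rows by auto

lemma reach: "x \<in> B \<Longrightarrow> \<exists>j. piF M1 a1 B j x > 0"
proof (rule ccontr)
  assume x0: "x \<in> B" and nr: "\<not> (\<exists>j. piF M1 a1 B j x > 0)"
  define Z where "Z = {y\<in>B. \<forall>j. piF M1 a1 B j y \<le> 0}"
  have xZ: "x \<in> Z" unfolding Z_def using x0 nr by (auto simp: not_less)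
  have pinn: "y \<in> B \<Longrightarrow> piF M1 a1 B j y \<ge> 0" for y j using pi_nonneg[of B M1 a1, OF fin_facts] by blast
  define w where "w e = (if e \<in> Z then 0 else 1 :: ennreal)" for e
  have kZ: "k \<notin> Z" unfolding Z_def using kB by auto
  have wB: "(\<Sum>e\<in>E. Am 1 y e * w e) \<le> w y" if y: "y \<in> B" for y
  proof (cases "y \<in> Z")
    case False
    have "(\<Sum>e\<in>E. Am 1 y e * w e) \<le> (\<Sum>e\<in>E. Am 1 y e)"
      by (intro sum_mono) (auto simp: w_def)
    also have "\<dots> \<le> 1" using row_Am1[OF B_nonneg[OF y]] .
    finally show ?thesis using False by (simp add: w_def)
  next
    case True
    have yp: "piF M1 a1 B j y \<le> 0" for j using True unfolding Z_def by auto
    have "Am 1 y e * w e = 0" if e: "e \<in> E" for e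
    proof (cases "e = k")
      case True
      have "piF M1 a1 B (Suc 0) y = a1 y" by simp
      then have "a1 y = 0" using yp[of "Suc 0"] a1nn[OF y] by simp
      moreover have "M1 y k = a1 y" by (simp add: M1_def a1_def)
      ultimately show ?thesis using True Am1_eq[OF B_nonneg[OF y] kE] by simp
    next
      case ek: False
      then have eB: "e \<in> B" using e unfolding E_B by auto
      show ?thesis
      proof (cases "e \<in> Z")
        case True then show ?thesis by (simp add: w_def)
      next
        case False
        then obtain j where pj: "piF M1 a1 B j e > 0" using eB unfolding Z_def by (auto simp: not_le)
        have "M1 y e * piF M1 a1 B j e \<le> (\<Sum>e'\<in>B. M1 y e' * piF M1 a1 B j e')"
          using eB finB by (intro member_le_sum) (auto intro!: mult_nonneg_nonneg M1nn[OF y] pinn)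
        also have "\<dots> \<le> piF M1 a1 B (Suc j) y" using a1nn[OF y] by simp
        also have "\<dots> \<le> 0" by (rule yp)
        finally have "M1 y e \<le> 0" using pj by (simp add: mult_le_0_iff)
        then have "M1 y e = 0" using M1nn[OF y eB] by simp
        then show ?thesis using Am1_eq[OF B_nonneg[OF y] B_E[OF eB]] by simp
      qed
    qed
    then have "(\<Sum>e\<in>E. Am 1 y e * w e) = 0" by (intro sum.neutral) blast
    then show ?thesis by simp
  qed
  have "F 1 x \<le> (\<Sum>e\<in>E. H 1 e x * w e)"
    by (rule V_super) (use kZ wB B_nonneg[OF x0] in \<open>auto simp: w_def\<close>)
  also have "\<dots> = w x" by (rule sum_H_onE[OF B_E[OF x0]])
  also have "\<dots> = 0" using xZ by (simp add: w_def)
  finally show False using F1_pos[OF B_nonneg[OF x0]] by simp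
qed

lemma int_exp_P:
  assumes "0 \<le> \<alpha>" "\<alpha> \<le> d"
  shows "(\<integral>\<^sup>+ v. ennreal (exp (\<alpha> * v)) \<partial>measure_pmf (P x)) \<le> ennreal (exp (\<alpha> * x) * Mb)"
proof -
  have "(\<integral>\<^sup>+ v. ennreal (exp (\<alpha> * v)) \<partial>measure_pmf (P x))
      = (\<integral>\<^sup>+ ab. ennreal (exp (\<alpha> * x)) * ennreal (exp (\<alpha> * real_of_int (fst ab))) \<partial>measure_pmf (m x))"
    unfolding int_P by (simp add: distrib_left exp_add ennreal_mult'')
  also have "\<dots> = ennreal (exp (\<alpha> * x)) * (\<integral>\<^sup>+ ab. ennreal (exp (\<alpha> * real_of_int (fst ab))) \<partial>measure_pmf (m x))"
    by (simp add: nn_integral_cmult)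
  also have "\<dots> \<le> ennreal (exp (\<alpha> * x)) * ennreal Mb"
    using exp_alpha_bound[OF assms] by (intro mult_left_mono) auto
  also have "\<dots> = ennreal (exp (\<alpha> * x) * Mb)" using Mb_pos by (simp add: ennreal_mult)
  finally show ?thesis .
qed

end

context chaink begin

lemma core:
  assumes th: "\<theta> > 0"
  shows "\<exists>l>1. \<exists>C\<ge>0. \<forall>x\<ge>0. (\<integral>\<^sup>+ v. F (ennreal l) v \<partial>measure_pmf (P x)) \<le> ennreal (C * exp (\<theta> * x))"
proof -
  define \<alpha>0 where "\<alpha>0 = alpha1"
  have a0: "0 < \<alpha>0" "\<alpha>0 \<le> alpha1" unfolding \<alpha>0_def using alpha1_pos by auto
  have ad: "\<alpha>0 \<le> d" using dgc unfolding \<alpha>0_def alpha1_def by auto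
  define \<rho>0 where "\<rho>0 = 1 + \<alpha>0 * m1 / 2"
  have \<rho>0: "\<rho>0 \<ge> 1/2" "\<rho>0 < 1" unfolding \<rho>0_def using drift(2)[OF a0] a0 m1_neg' by (auto simp: mult_pos_neg)
  define l0 where "l0 = 1 / \<rho>0"
  have l0: "l0 > 1" "l0 * \<rho>0 = 1" "l0 \<ge> 0" unfolding l0_def using \<rho>0 by auto
  define K0 where "K0 = l0 * exp (\<alpha>0 * k0) * Mb"
  have K0: "K0 \<ge> 0" unfolding K0_def using l0 Mb_pos by simp
  have Am0: "Am (ennreal l0) x e \<le> ennreal K0" if x: "x \<in> B" and e: "e \<in> E" for x e
  proof -
    have xn: "x \<ge> 0" "x < k0" using x B_sub by auto
    have I: "(\<integral>\<^sup>+ v. H (ennreal l0) e v \<partial>measure_pmf (P x)) \<le> ennreal (exp (\<alpha>0 * x) * Mb)"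
    proof -
      have "(\<integral>\<^sup>+ v. H (ennreal l0) e v \<partial>measure_pmf (P x)) \<le> (\<integral>\<^sup>+ v. ennreal (exp (\<alpha>0 * v)) \<partial>measure_pmf (P x))"
      proof (rule nn_integral_mono_AE, unfold AE_measure_pmf_iff, intro ballI)
        fix v assume v: "v \<in> set_pmf (P x)"
        have "H (ennreal l0) e v \<le> (\<Sum>e\<in>E. H (ennreal l0) e v)" using e finE by (intro member_le_sum) auto
        also have "\<dots> \<le> ennreal (exp (\<alpha>0 * v))"
          using outer_bound[OF a0 l0(3)] l0(2) P_supp[OF xn(1) v] unfolding \<rho>0_def by simp
        finally show "H (ennreal l0) e v \<le> ennreal (exp (\<alpha>0 * v))" .
      qed
      also have "\<dots> \<le> ennreal (exp (\<alpha>0 * x) * Mb)" using int_exp_P a0 ad by auto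
      finally show ?thesis .
    qed
    have "Am (ennreal l0) x e \<le> ennreal l0 * ennreal (exp (\<alpha>0 * x) * Mb)"
      unfolding Am_def by (rule mult_left_mono[OF I]) simp
    also have "\<dots> = ennreal (l0 * (exp (\<alpha>0 * x) * Mb))" using l0 Mb_pos by (simp add: ennreal_mult)
    also have "\<dots> \<le> ennreal K0"
    proof (rule ennreal_leI)
      have "exp (\<alpha>0 * x) \<le> exp (\<alpha>0 * k0)" using a0 xn by simp
      then have "exp (\<alpha>0 * x) * Mb \<le> exp (\<alpha>0 * k0) * Mb" using Mb_pos by (intro mult_right_mono) auto
      then show "l0 * (exp (\<alpha>0 * x) * Mb) \<le> K0" unfolding K0_def using l0 by (simp add: mult.assoc mult_left_mono)
    qed
    finally show ?thesis .
  qed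
  obtain \<eta>0 where \<eta>0: "\<eta>0 > 0" and FT: "\<forall>\<eta> M a. 0 \<le> \<eta> \<and> \<eta> \<le> \<eta>0 \<and> (\<forall>x\<in>B. \<forall>e\<in>B. 0 \<le> M x e \<and> M x e \<le> M1 x e + \<eta> * K0)
      \<and> (\<forall>x\<in>B. 0 \<le> a x \<and> a x \<le> a1 x + \<eta> * K0) \<longrightarrow>
      (\<exists>v. (\<forall>x\<in>B. 0 \<le> v x) \<and> (\<forall>x\<in>B. (\<Sum>e\<in>B. M x e * v e) + a x \<le> v x))"
    using finite_trick[of B M1 a1 K0, OF fin_facts reach K0] by blast
  define \<alpha> where "\<alpha> = min \<theta> \<alpha>0"
  have a: "0 < \<alpha>" "\<alpha> \<le> alpha1" "\<alpha> \<le> \<theta>" "\<alpha> \<le> d" using a0 th ad by (auto simp: \<alpha>_def)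
  define \<rho> where "\<rho> = 1 + \<alpha> * m1 / 2"
  have \<rho>: "\<rho> \<ge> 1/2" "\<rho> < 1" using drift(2)[OF a(1,2)] a m1_neg' unfolding \<rho>_def by (auto simp: mult_pos_neg)
  define \<eta>' where "\<eta>' = min \<eta>0 1"
  have \<eta>': "0 < \<eta>'" "\<eta>' \<le> 1" "\<eta>' \<le> \<eta>0" using \<eta>0 by (auto simp: \<eta>'_def)
  define l where "l = min (1/\<rho>) (1 + \<eta>' * (l0 - 1))"
  have l1: "l > 1"
  proof -
    have "1/\<rho> > 1" using \<rho> by (simp add: field_simps)
    moreover have "1 + \<eta>' * (l0 - 1) > 1" using \<eta>' l0 by simp
    ultimately show ?thesis unfolding l_def by simp
  qed
  have lmin: "l \<le> 1 + \<eta>' * (l0 - 1)" unfolding l_def by simp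
  have ll0: "l \<le> l0"
  proof -
    have "\<eta>' * (l0 - 1) \<le> 1 * (l0 - 1)" using \<eta>' l0 by (intro mult_right_mono) auto
    then have "\<eta>' * (l0 - 1) \<le> l0 - 1" by simp
    then show ?thesis using lmin by linarith
  qed
  have l\<rho>: "l * (1 + \<alpha> * m1 / 2) \<le> 1"
  proof -
    have "l \<le> 1/\<rho>" unfolding l_def by simp
    then have "l * \<rho> \<le> (1/\<rho>) * \<rho>" using \<rho> by (intro mult_right_mono) auto
    then show ?thesis using \<rho> unfolding \<rho>_def by simp
  qed
  define \<eta> where "\<eta> = (l - 1) / (l0 - 1)"
  have \<eta>: "0 \<le> \<eta>" "\<eta> \<le> \<eta>0"
  proof -
    show "0 \<le> \<eta>" unfolding \<eta>_def using l1 l0 by simp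
    have "l - 1 \<le> \<eta>' * (l0 - 1)" using lmin by linarith
    then have "\<eta> \<le> \<eta>'" unfolding \<eta>_def using l0 by (simp add: field_simps)
    then show "\<eta> \<le> \<eta>0" using \<eta>' by simp
  qed
  define M where "M x e = enn2real (Am (ennreal l) x e)" for x e
  define a where "a x = M x k" for x
  have Aml: "Am (ennreal l) x e = ennreal (M x e) \<and> 0 \<le> M x e \<and> M x e \<le> M1 x e + \<eta> * K0" if x: "x \<in> B" and e: "e \<in> E" for x e
  proof -
    have "Am (ennreal l) x e \<le> Am 1 x e + ennreal \<eta> * Am (ennreal l0) x e"
      using Am_interp[of l l0] l1 ll0 l0 unfolding \<eta>_def by auto
    also have "\<dots> \<le> ennreal (M1 x e) + ennreal \<eta> * ennreal K0"
      using Am1_eq[OF B_nonneg[OF x] e] Am0[OF x e] by (auto intro: add_mono mult_left_mono)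
    also have "\<dots> = ennreal (M1 x e + \<eta> * K0)" using \<eta> K0 by (simp add: ennreal_mult ennreal_plus M1_def)
    finally have le: "Am (ennreal l) x e \<le> ennreal (M1 x e + \<eta> * K0)" .
    have nt: "Am (ennreal l) x e < \<top>" using le_less_trans[OF le ennreal_less_top] .
    then have eq: "Am (ennreal l) x e = ennreal (M x e)" unfolding M_def using ennreal_enn2real[OF nt] by simp
    have "M1 x e + \<eta> * K0 \<ge> 0" using \<eta> K0 by (simp add: M1_def)
    then have "M x e \<le> M1 x e + \<eta> * K0" using le eq by (simp add: ennreal_le_iff)
    moreover have "0 \<le> M x e" unfolding M_def by simp
    ultimately show ?thesis using eq by simp
  qed
  have cond: "0 \<le> \<eta> \<and> \<eta> \<le> \<eta>0 \<and> (\<forall>x\<in>B. \<forall>e\<in>B. 0 \<le> M x e \<and> M x e \<le> M1 x e + \<eta> * K0)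
      \<and> (\<forall>x\<in>B. 0 \<le> a x \<and> a x \<le> a1 x + \<eta> * K0)"
  proof (intro conjI ballI \<eta>)
    fix x e assume x: "x \<in> B" and e: "e \<in> B"
    show "0 \<le> M x e" "M x e \<le> M1 x e + \<eta> * K0" using Aml[OF x B_E[OF e]] by auto
  next
    fix x assume x: "x \<in> B"
    have a1M: "a1 x = M1 x k" by (simp add: a1_def M1_def)
    show "0 \<le> a x" "a x \<le> a1 x + \<eta> * K0" using Aml[OF x kE] unfolding a_def a1M by auto
  qed
  obtain v where vnn: "\<And>x. x \<in> B \<Longrightarrow> 0 \<le> v x" and hv: "\<And>x. x \<in> B \<Longrightarrow> (\<Sum>e\<in>B. M x e * v e) + a x \<le> v x"
  proof -
    have "\<exists>v. (\<forall>x\<in>B. 0 \<le> v x) \<and> (\<forall>x\<in>B. (\<Sum>e\<in>B. M x e * v e) + a x \<le> v x)"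
      using mp[OF spec[OF spec[OF spec[OF FT, of \<eta>], of M], of a] cond] .
    then show ?thesis using that by blast
  qed
  define w where "w e = (if e = k then 1 else ennreal (v e))" for e
  have wB: "(\<Sum>e\<in>E. Am (ennreal l) x e * w e) \<le> w x" if x: "x \<in> B" for x
  proof -
    have "(\<Sum>e\<in>E. Am (ennreal l) x e * w e) = Am (ennreal l) x k * 1 + (\<Sum>e\<in>B. Am (ennreal l) x e * w e)"
      unfolding E_B using finB kB by (simp add: w_def)
    also have "(\<Sum>e\<in>B. Am (ennreal l) x e * w e) = (\<Sum>e\<in>B. ennreal (M x e * v e))"
      using Aml[OF x] B_E kB vnn by (intro sum.cong) (auto simp: w_def ennreal_mult)
    also have "\<dots> = ennreal (\<Sum>e\<in>B. M x e * v e)"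
      using Aml[OF x] B_E vnn by (intro sum_ennreal) auto
    also have "Am (ennreal l) x k * 1 = ennreal (a x)" using Aml[OF x kE] by (simp add: a_def)
    also have "ennreal (a x) + ennreal (\<Sum>e\<in>B. M x e * v e) = ennreal ((\<Sum>e\<in>B. M x e * v e) + a x)"
      using Aml[OF x] B_E vnn kE by (simp add: a_def sum_nonneg ennreal_plus add.commute)
    also have "\<dots> \<le> ennreal (v x)" using hv[OF x] by (rule ennreal_leI)
    also have "\<dots> = w x" using x kB by (auto simp: w_def)
    finally show ?thesis .
  qed
  have wk: "w k \<ge> 1" by (simp add: w_def)
  define Ws where "Ws = 1 + (\<Sum>e\<in>B. v e)"
  have Ws: "Ws \<ge> 1" unfolding Ws_def using vnn by (simp add: sum_nonneg)
  have wle: "w e \<le> ennreal Ws" if e: "e \<in> E" for e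
  proof (cases "e = k")
    case True then show ?thesis using Ws by (simp add: w_def)
  next
    case False
    then have eB: "e \<in> B" using e unfolding E_B by auto
    have "v e \<le> (\<Sum>e\<in>B. v e)" using finB eB vnn by (intro member_le_sum) auto
    then have "v e \<le> Ws" unfolding Ws_def by simp
    then show ?thesis using False by (simp add: w_def ennreal_leI)
  qed
  have Fb: "F (ennreal l) y \<le> ennreal (Ws * exp (\<alpha> * y))" if y: "y \<ge> 0" for y
  proof -
    have "F (ennreal l) y \<le> (\<Sum>e\<in>E. H (ennreal l) e y * w e)" by (rule V_super[OF wk wB y])
    also have "\<dots> \<le> (\<Sum>e\<in>E. H (ennreal l) e y * ennreal Ws)" by (intro sum_mono mult_left_mono wle) auto
    also have "\<dots> = (\<Sum>e\<in>E. H (ennreal l) e y) * ennreal Ws" by (simp add: sum_distrib_right)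
    also have "\<dots> \<le> ennreal (exp (\<alpha> * y)) * ennreal Ws"
      using outer_bound[OF a(1,2) _ l\<rho> y] l1 by (intro mult_right_mono) auto
    also have "\<dots> = ennreal (Ws * exp (\<alpha> * y))" using Ws by (simp add: ennreal_mult mult.commute)
    finally show ?thesis .
  qed
  have WM: "0 \<le> Ws * Mb" using Ws Mb_pos by simp
  have main: "(\<integral>\<^sup>+ v. F (ennreal l) v \<partial>measure_pmf (P x)) \<le> ennreal (Ws * Mb * exp (\<theta> * real_of_int x))"
    if x: "0 \<le> x" for x :: int
  proof -
    have "(\<integral>\<^sup>+ v. F (ennreal l) v \<partial>measure_pmf (P x)) \<le> (\<integral>\<^sup>+ v. ennreal Ws * ennreal (exp (\<alpha> * v)) \<partial>measure_pmf (P x))"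
      by (rule nn_integral_mono_AE) (use Fb P_supp[OF x] Ws in \<open>auto simp: AE_measure_pmf_iff ennreal_mult\<close>)
    also have "\<dots> = ennreal Ws * (\<integral>\<^sup>+ v. ennreal (exp (\<alpha> * v)) \<partial>measure_pmf (P x))" by (simp add: nn_integral_cmult)
    also have "\<dots> \<le> ennreal Ws * ennreal (exp (\<alpha> * x) * Mb)" using int_exp_P[of \<alpha> x] a by (intro mult_left_mono) auto
    also have "\<dots> = ennreal (Ws * Mb * exp (\<alpha> * x))" using Ws Mb_pos by (simp add: ennreal_mult mult_ac)
    also have "\<dots> \<le> ennreal (Ws * Mb * exp (\<theta> * x))"
    proof (rule ennreal_leI)
      have "\<alpha> * x \<le> \<theta> * x" using a x by (intro mult_right_mono) auto
      then show "Ws * Mb * exp (\<alpha> * x) \<le> Ws * Mb * exp (\<theta> * x)" using Ws Mb_pos by (intro mult_left_mono) auto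
    qed
    finally show ?thesis .
  qed
  show ?thesis using l1 WM main by blast
qed

end

context chaink begin

lemma hitA_le_G: "hitA K k N t w \<le> hitG P (\<lambda>x. x = k) (\<lambda>_. 1) 1 t (fst w)"
proof (induction t arbitrary: w)
  case 0 then show ?case by simp
next
  case (Suc t)
  show ?case
  proof (cases "fst w = k")
    case True then show ?thesis by simp
  next
    case False
    have "hitA K k N (Suc t) w = (\<integral>\<^sup>+ v. hitA K k N t v \<partial>measure_pmf (K w))" using False by simp
    also have "\<dots> \<le> (\<integral>\<^sup>+ v. hitG P (\<lambda>x. x = k) (\<lambda>_. 1) 1 t (fst v) \<partial>measure_pmf (K w))"
      by (intro nn_integral_mono Suc.IH)
    also have "\<dots> = (\<integral>\<^sup>+ v. hitG P (\<lambda>x. x = k) (\<lambda>_. 1) 1 t v \<partial>measure_pmf (P (fst w)))" by (rule int_K_fst)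
    also have "\<dots> = hitG P (\<lambda>x. x = k) (\<lambda>_. 1) 1 (Suc t) (fst w)" using False by simp
    finally show ?thesis .
  qed
qed

definition "phi y = exp (g * y) + exp (- g * y)"
definition "C1 = c * exp (d * k0) + exp (g * k0) + 2"

lemma C1_ge2: "C1 \<ge> 2" unfolding C1_def using dgc by (simp add: add_nonneg_nonneg)
lemma phi_pos: "phi y > 0" unfolding phi_def by (simp add: add_pos_pos)

lemma phi_step: "(\<integral>\<^sup>+ v. ennreal (phi (real_of_int (snd v))) \<partial>measure_pmf (K w)) \<le> ennreal (C1 * phi (real_of_int (snd w)))"
proof -
  let ?y = "real_of_int (snd w)"
  have "(\<integral>\<^sup>+ v. ennreal (phi (real_of_int (snd v))) \<partial>measure_pmf (K w))
      = (\<integral>\<^sup>+ ab. ennreal (exp (g * ?y)) * ennreal (exp (g * real_of_int (snd ab)))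
              + ennreal (exp (- g * ?y)) * ennreal (exp (- g * real_of_int (snd ab))) \<partial>measure_pmf (m (fst w)))"
    unfolding int_K
  proof (intro nn_integral_cong)
    fix ab :: "int \<times> int"
    let ?b = "real_of_int (snd ab)"
    have "phi (?y + ?b) = exp (g * ?y) * exp (g * ?b) + exp (- g * ?y) * exp (- g * ?b)"
      unfolding phi_def by (simp add: distrib_left exp_add[symmetric])
    then show "ennreal (phi (real_of_int (snd (fst w + fst ab, snd w + snd ab)))) =
      ennreal (exp (g * ?y)) * ennreal (exp (g * ?b)) + ennreal (exp (- g * ?y)) * ennreal (exp (- g * ?b))"
      by (simp add: ennreal_plus ennreal_mult)
  qed
  also have "\<dots> = ennreal (exp (g * ?y)) * (\<integral>\<^sup>+ ab. ennreal (exp (g * real_of_int (snd ab))) \<partial>measure_pmf (m (fst w)))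
      + ennreal (exp (- g * ?y)) * (\<integral>\<^sup>+ ab. ennreal (exp (- g * real_of_int (snd ab))) \<partial>measure_pmf (m (fst w)))"
    by (subst nn_integral_add) (auto simp: nn_integral_cmult)
  also have "\<dots> \<le> ennreal (exp (g * ?y)) * ennreal (c * exp (d * k0)) + ennreal (exp (- g * ?y)) * ennreal (exp (g * k0))"
    using exp_gb_bound exp_mgb_bound by (intro add_mono mult_left_mono) auto
  also have "\<dots> = ennreal (exp (g * ?y) * (c * exp (d * k0)) + exp (- g * ?y) * exp (g * k0))"
    using dgc by (simp add: ennreal_mult ennreal_plus)
  also have "\<dots> \<le> ennreal (C1 * phi ?y)"
  proof (rule ennreal_leI)
    have "c * exp (d * k0) \<le> C1" "exp (g * k0) \<le> C1" unfolding C1_def using dgc by auto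
    then have e1: "exp (g * ?y) * (c * exp (d * k0)) \<le> exp (g * ?y) * C1"
      and e2: "exp (- g * ?y) * exp (g * k0) \<le> exp (- g * ?y) * C1"
      by (auto intro!: mult_left_mono)
    have "C1 * phi ?y = exp (g * ?y) * C1 + exp (- g * ?y) * C1" unfolding phi_def by (simp add: algebra_simps)
    then show "exp (g * ?y) * (c * exp (d * k0)) + exp (- g * ?y) * exp (g * k0) \<le> C1 * phi ?y"
      using e1 e2 by linarith
  qed
  finally show ?thesis .
qed

lemma chernoff: "hitA K k N t w \<le> ennreal (exp (- g * N) * C1 ^ t * phi (real_of_int (snd w)))"
proof (induction t arbitrary: w)
  case 0
  show ?case
  proof (cases "fst w = k \<and> \<bar>snd w\<bar> \<ge> int N")
    case True
    then have y: "real N \<le> \<bar>real_of_int (snd w)\<bar>" by linarith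
    have "exp (g * N) \<le> exp (g * \<bar>real_of_int (snd w)\<bar>)" using y dgc by simp
    also have "\<dots> \<le> phi (real_of_int (snd w))" unfolding phi_def by (cases "snd w \<ge> 0") (auto simp: abs_if)
    finally have "1 \<le> exp (- g * N) * phi (real_of_int (snd w))"
      by (simp add: exp_minus field_simps)
    moreover have "hitA K k N 0 w = 1" using True by simp
    ultimately show ?thesis using ennreal_leI by fastforce
  next
    case False
    then have "hitA K k N 0 w = 0" by auto
    then show ?thesis by simp
  qed
next
  case (Suc t)
  show ?case
  proof (cases "fst w = k")
    case True then show ?thesis by simp
  next
    case False
    have "hitA K k N (Suc t) w = (\<integral>\<^sup>+ v. hitA K k N t v \<partial>measure_pmf (K w))" using False by simp
    also have "\<dots> \<le> (\<integral>\<^sup>+ v. ennreal (exp (- g * N) * C1 ^ t) * ennreal (phi (real_of_int (snd v))) \<partial>measure_pmf (K w))"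
    proof (intro nn_integral_mono)
      fix v :: "int \<times> int"
      have "ennreal (exp (- g * N) * C1 ^ t * phi (real_of_int (snd v))) = ennreal (exp (- g * N) * C1 ^ t) * ennreal (phi (real_of_int (snd v)))"
        using phi_pos[of "real_of_int (snd v)"] C1_ge2 by (intro ennreal_mult) auto
      then show "hitA K k N t v \<le> ennreal (exp (- g * N) * C1 ^ t) * ennreal (phi (real_of_int (snd v)))"
        using Suc.IH[of v] by simp
    qed
    also have "\<dots> = ennreal (exp (- g * N) * C1 ^ t) * (\<integral>\<^sup>+ v. ennreal (phi (real_of_int (snd v))) \<partial>measure_pmf (K w))"
      by (simp add: nn_integral_cmult)
    also have "\<dots> \<le> ennreal (exp (- g * N) * C1 ^ t) * ennreal (C1 * phi (real_of_int (snd w)))"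
      by (intro mult_left_mono phi_step) simp
    also have "\<dots> = ennreal (exp (- g * N) * C1 ^ Suc t * phi (real_of_int (snd w)))"
    proof -
      have "0 \<le> C1 * phi (real_of_int (snd w))" using C1_ge2 phi_pos[of "real_of_int (snd w)"] by simp
      then have "ennreal (exp (- g * N) * C1 ^ t) * ennreal (C1 * phi (real_of_int (snd w)))
          = ennreal (exp (- g * N) * C1 ^ t * (C1 * phi (real_of_int (snd w))))"
        using C1_ge2 by (subst ennreal_mult) auto
      then show ?thesis by (simp add: mult_ac)
    qed
    finally show ?thesis .
  qed
qed

lemma F_series: "(\<Sum>t. ennreal (l ^ t) * (\<integral>\<^sup>+ v. hitG P (\<lambda>x. x = k) (\<lambda>_. 1) 1 t v \<partial>measure_pmf (P x)))
    = (\<integral>\<^sup>+ v. F (ennreal l) v \<partial>measure_pmf (P x))" if "l \<ge> 0"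
proof -
  have "(\<integral>\<^sup>+ v. F (ennreal l) v \<partial>measure_pmf (P x)) = (\<Sum>t. (\<integral>\<^sup>+ v. ennreal l ^ t * hitG P (\<lambda>x. x = k) (\<lambda>_. 1) 1 t v \<partial>measure_pmf (P x)))"
    unfolding F_def Gr_def hitG_scale[of P _ _ "ennreal l"] by (subst nn_integral_suminf) auto
  also have "\<dots> = (\<Sum>t. ennreal (l ^ t) * (\<integral>\<^sup>+ v. hitG P (\<lambda>x. x = k) (\<lambda>_. 1) 1 t v \<partial>measure_pmf (P x)))"
    using that by (simp add: nn_integral_cmult ennreal_power)
  finally show ?thesis by simp
qed

end

lemma geom_le: "(C::real) \<ge> 2 \<Longrightarrow> (\<Sum>t<m. C ^ Suc t) \<le> 2 * C ^ m"
proof (induction m)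
  case 0 then show ?case by simp
next
  case (Suc m)
  have "2 * C ^ m \<le> C * C ^ m" using Suc.prems by (intro mult_right_mono) auto
  moreover have "(\<Sum>t<Suc m. C ^ Suc t) = (\<Sum>t<m. C ^ Suc t) + C * C ^ m" by simp
  moreover have "C ^ Suc (Suc m) = C * (C * C ^ m)" by simp
  moreover have "(\<Sum>t<m. C ^ Suc t) \<le> 2 * C ^ m" using Suc by simp
  ultimately show ?case by simp
qed

lemma div_real: "r \<ge> 1 \<Longrightarrow> real (n div r) \<le> real n / real r \<and> real n / real r \<le> real (n div r) + 1"
proof -
  assume r: "r \<ge> 1"
  have "(n div r) * r \<le> n" by simp
  then have a: "real (n div r) * real r \<le> real n" by (metis of_nat_le_iff of_nat_mult)
  have "n < (n div r + 1) * r" using r by (metis add.commute div_mult_mod_eq mod_less_divisor mult_Suc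
        nat_add_left_cancel_less not_one_le_zero plus_1_eq_Suc zero_less_iff_neq_zero le_add2 le_less_trans)
  then have b: "real n \<le> (real (n div r) + 1) * real r" by (metis less_imp_le of_nat_1 of_nat_add of_nat_le_iff of_nat_mult)
  have rp: "real r > 0" using r by simp
  show ?thesis using a b rp by (simp add: field_simps)
qed

context chaink begin

theorem final:
  assumes th: "\<theta> > 0"
  shows "\<exists>C>0. \<exists>\<delta>>0. \<forall>i n::nat. prob_hit_Y_ge K k n (int i, 0) \<le> ennreal (C * exp (\<theta> * real i - \<delta> * real n))"
proof -
  obtain l Cc where l1: "l > 1" and Cc: "Cc \<ge> 0"
    and core': "\<And>x. x \<ge> 0 \<Longrightarrow> (\<integral>\<^sup>+ v. F (ennreal l) v \<partial>measure_pmf (P x)) \<le> ennreal (Cc * exp (\<theta> * x))"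
    using core[OF th] by blast
  define r :: nat where "r = nat \<lceil>2 * ln C1 / g\<rceil> + 1"
  have r1: "r \<ge> 1" unfolding r_def by simp
  have rr: "ln C1 \<le> real r * g / 2"
  proof -
    have "2 * ln C1 / g \<le> real r" unfolding r_def by linarith
    then show ?thesis using dgc by (simp add: field_simps)
  qed
  have lnC1: "ln C1 \<ge> 0" using C1_ge2 by simp
  have lnl: "ln l > 0" using l1 by simp
  define \<delta> where "\<delta> = min (g/2) (ln l / real r)"
  have \<delta>: "\<delta> > 0" "\<delta> \<le> g/2" "\<delta> \<le> ln l / real r"
  proof -
    have "ln l / real r > 0" using lnl r1 by simp
    moreover have "g / 2 > 0" using dgc by simp
    ultimately show "\<delta> > 0" unfolding \<delta>_def by linarith
    show "\<delta> \<le> g/2" "\<delta> \<le> ln l / real r" unfolding \<delta>_def by linarith+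
  qed
  define C where "C = 4 + l * Cc"
  have C: "C > 0" unfolding C_def using l1 Cc by (simp add: add_pos_nonneg)
  have main: "prob_hit_Y_ge K k n (int i, 0) \<le> ennreal (C * exp (\<theta> * real i - \<delta> * real n))" for i n :: nat
  proof -
    define z where "z = (int i, 0 :: int)"
    define m where "m = n div r"
    define a where "a t = (\<integral>\<^sup>+ v. hitA K k n t v \<partial>measure_pmf (K z))" for t
    define b where "b t = (\<integral>\<^sup>+ v. hitG P (\<lambda>x. x = k) (\<lambda>_. 1) 1 t v \<partial>measure_pmf (P (int i)))" for t
    have mr: "real m \<le> real n / real r" "real n / real r \<le> real m + 1" using div_real[OF r1, of n] unfolding m_def by auto
    have split: "prob_hit_Y_ge K k n (int i, 0) = (\<Sum>t. a (t + m)) + (\<Sum>t<m. a t)"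
      unfolding prob_hit_Y_ge_def a_def z_def by (rule suminf_offset) (simp add: summableI)
    have at: "a t \<le> ennreal (2 * exp (- g * n) * C1 ^ Suc t)" for t
    proof -
      have "a t \<le> (\<integral>\<^sup>+ v. ennreal (exp (- g * n) * C1 ^ t) * ennreal (phi (real_of_int (snd v))) \<partial>measure_pmf (K z))"
        unfolding a_def
      proof (intro nn_integral_mono)
        fix v :: "int \<times> int"
        have "ennreal (exp (- g * n) * C1 ^ t * phi (real_of_int (snd v))) = ennreal (exp (- g * n) * C1 ^ t) * ennreal (phi (real_of_int (snd v)))"
          using phi_pos[of "real_of_int (snd v)"] C1_ge2 by (intro ennreal_mult) auto
        then show "hitA K k n t v \<le> ennreal (exp (- g * n) * C1 ^ t) * ennreal (phi (real_of_int (snd v)))"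
          using chernoff[of n t v] by simp
      qed
      also have "\<dots> = ennreal (exp (- g * n) * C1 ^ t) * (\<integral>\<^sup>+ v. ennreal (phi (real_of_int (snd v))) \<partial>measure_pmf (K z))"
        by (simp add: nn_integral_cmult)
      also have "\<dots> \<le> ennreal (exp (- g * n) * C1 ^ t) * ennreal (C1 * phi (real_of_int (snd z)))"
        by (intro mult_left_mono phi_step) simp
      also have "phi (real_of_int (snd z)) = 2" unfolding z_def phi_def by simp
      also have "ennreal (exp (- g * n) * C1 ^ t) * ennreal (C1 * 2) = ennreal (2 * exp (- g * n) * C1 ^ Suc t)"
        using C1_ge2 by (subst ennreal_mult[symmetric]) (auto simp: mult_ac)
      finally show ?thesis .
    qed
    have P1: "(\<Sum>t<m. a t) \<le> ennreal (4 * exp (- \<delta> * n))"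
    proof -
      have "(\<Sum>t<m. a t) \<le> (\<Sum>t<m. ennreal (2 * exp (- g * n) * C1 ^ Suc t))" by (intro sum_mono at)
      also have "\<dots> = ennreal (\<Sum>t<m. 2 * exp (- g * n) * C1 ^ Suc t)"
        using C1_ge2 by (intro sum_ennreal) auto
      also have "(\<Sum>t<m. 2 * exp (- g * n) * C1 ^ Suc t) = 2 * exp (- g * n) * (\<Sum>t<m. C1 ^ Suc t)"
        by (simp add: sum_distrib_left)
      also have "\<dots> \<le> 2 * exp (- g * n) * (2 * C1 ^ m)"
        using geom_le[OF C1_ge2] by (intro mult_left_mono) auto
      also have "C1 ^ m \<le> exp (g * n / 2)"
      proof -
        have "exp (real m * ln C1) = exp (ln C1) ^ m" by (rule exp_of_nat_mult)
        then have "C1 ^ m = exp (real m * ln C1)" using C1_ge2 by simp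
        also have "real m * ln C1 \<le> (real n / real r) * (real r * g / 2)"
          using mr(1) rr lnC1 by (intro mult_mono) auto
        also have "(real n / real r) * (real r * g / 2) = g * n / 2" using r1 by (simp add: field_simps)
        finally show ?thesis by simp
      qed
      then have "2 * exp (- g * n) * (2 * C1 ^ m) \<le> 2 * exp (- g * n) * (2 * exp (g * n / 2))" by simp
      also have "\<dots> = 4 * exp (- (g / 2) * n)"
        by (simp add: mult_ac exp_add[symmetric] field_simps)
      also have "\<dots> \<le> 4 * exp (- \<delta> * n)"
      proof -
        have "\<delta> * n \<le> (g/2) * n" using \<delta> by (intro mult_right_mono) auto
        then show ?thesis by simp
      qed
      finally show ?thesis by (simp add: ennreal_leI)
    qed
    have ab: "a t \<le> b t" for t
    proof -
      have "a t \<le> (\<integral>\<^sup>+ v. hitG P (\<lambda>x. x = k) (\<lambda>_. 1) 1 t (fst v) \<partial>measure_pmf (K z))"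
        unfolding a_def by (intro nn_integral_mono hitA_le_G)
      also have "\<dots> = b t" unfolding b_def int_K_fst z_def by simp
      finally show ?thesis .
    qed
    define S where "S = (\<Sum>t. b (t + m))"
    have "ennreal (l ^ m) * S = (\<Sum>t. ennreal (l ^ m) * b (t + m))" unfolding S_def by simp
    also have "\<dots> \<le> (\<Sum>t. ennreal (l ^ (t + m)) * b (t + m))"
    proof (intro suminf_le allI)
      fix t
      have "l ^ m \<le> l ^ (t + m)" using l1 by (intro power_increasing) auto
      then show "ennreal (l ^ m) * b (t + m) \<le> ennreal (l ^ (t + m)) * b (t + m)"
        by (intro mult_right_mono ennreal_leI) auto
    qed (auto simp: summableI)
    also have "\<dots> \<le> (\<Sum>t. ennreal (l ^ t) * b t)"
    proof -
      have "(\<Sum>t. ennreal (l ^ t) * b t) = (\<Sum>t. ennreal (l ^ (t + m)) * b (t + m)) + (\<Sum>t<m. ennreal (l ^ t) * b t)"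
        by (rule suminf_offset) (simp add: summableI)
      then show ?thesis by (simp add: add_increasing2)
    qed
    also have "\<dots> = (\<integral>\<^sup>+ v. F (ennreal l) v \<partial>measure_pmf (P (int i)))"
      unfolding b_def using F_series[of l "int i"] l1 by simp
    also have "\<dots> \<le> ennreal (Cc * exp (\<theta> * i))" using core'[of "int i"] by simp
    finally have lS: "ennreal (l ^ m) * S \<le> ennreal (Cc * exp (\<theta> * i))" .
    have lm_pos: "l ^ m > 0" using l1 by simp
    have "S = ennreal (1 / l ^ m) * (ennreal (l ^ m) * S)"
    proof -
      have "ennreal (1 / l ^ m) * ennreal (l ^ m) = ennreal (1 / l ^ m * l ^ m)" using lm_pos by (subst ennreal_mult) auto
      also have "1 / l ^ m * l ^ m = 1" using l1 by simp
      finally have "ennreal (1 / l ^ m) * ennreal (l ^ m) = 1" by simp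
      then show ?thesis by (simp add: mult.assoc[symmetric])
    qed
    also have "\<dots> \<le> ennreal (1 / l ^ m) * ennreal (Cc * exp (\<theta> * i))" by (intro mult_left_mono lS) simp
    also have "\<dots> = ennreal (1 / l ^ m * (Cc * exp (\<theta> * i)))" using lm_pos Cc by (subst ennreal_mult) auto
    also have "1 / l ^ m \<le> l * exp (- \<delta> * n)"
    proof -
      have "exp (real (Suc m) * ln l) = exp (ln l) ^ Suc m" by (rule exp_of_nat_mult)
      then have "l ^ Suc m = exp (real (Suc m) * ln l)" using l1 by simp
      moreover have "\<delta> * n \<le> real (Suc m) * ln l"
      proof -
        have "\<delta> * n \<le> (ln l / real r) * n" using \<delta> by (intro mult_right_mono) auto
        also have "\<dots> = (real n / real r) * ln l" by simp
        also have "\<dots> \<le> real (Suc m) * ln l" using mr(2) lnl by (intro mult_right_mono) auto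
        finally show ?thesis .
      qed
      ultimately have "exp (\<delta> * n) \<le> l ^ Suc m" by simp
      then have "1 / l ^ Suc m \<le> 1 / exp (\<delta> * n)" by (simp add: frac_le)
      then have "l * (1 / l ^ Suc m) \<le> l * (1 / exp (\<delta> * n))" using l1 by (intro mult_left_mono) auto
      then show ?thesis using l1 by (simp add: exp_minus field_simps)
    qed
    then have "ennreal (1 / l ^ m * (Cc * exp (\<theta> * i))) \<le> ennreal (l * exp (- \<delta> * n) * (Cc * exp (\<theta> * i)))"
      using Cc by (intro ennreal_leI mult_right_mono) auto
    finally have P2: "S \<le> ennreal (l * Cc * exp (\<theta> * i - \<delta> * n))"
      by (simp add: mult_ac exp_diff exp_minus field_simps)
    have "(\<Sum>t. a (t + m)) \<le> S" unfolding S_def by (intro suminf_le ab allI) (auto simp: summableI)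
    then have "prob_hit_Y_ge K k n (int i, 0) \<le> ennreal (l * Cc * exp (\<theta> * i - \<delta> * n)) + ennreal (4 * exp (- \<delta> * n))"
      unfolding split using P1 P2 by (intro add_mono) auto
    also have "\<dots> \<le> ennreal (l * Cc * exp (\<theta> * i - \<delta> * n)) + ennreal (4 * exp (\<theta> * i - \<delta> * n))"
      using th by (intro add_mono ennreal_leI) auto
    also have "\<dots> = ennreal (C * exp (\<theta> * real i - \<delta> * real n))"
      unfolding C_def using l1 Cc by (simp add: ennreal_plus[symmetric] algebra_simps del: ennreal_plus)
    finally show ?thesis .
  qed
  show ?thesis using C \<delta>(1) main by blast
qed

end
theorem lemma5p5:
  fixes k0 :: int
    and mu :: "(int \<times> int) pmf"
    and mu1 :: "nat \<Rightarrow> (int \<times> int) pmf"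
    and mu2 :: "nat \<Rightarrow> (int \<times> int) pmf"
    and mu0 :: "nat \<Rightarrow> nat \<Rightarrow> (int \<times> int) pmf"
  assumes k0: "k0 \<ge> 1"
    and A1_mu: "\<And>a b. a < - k0 \<or> b < - k0 \<Longrightarrow> pmf mu (a, b) = 0"
    and A1_mu1: "\<And>j a b. int j < k0 \<Longrightarrow> a < - k0 \<or> b < - int j \<Longrightarrow> pmf (mu1 j) (a, b) = 0"
    and A1_mu2: "\<And>i a b. int i < k0 \<Longrightarrow> b < - k0 \<or> a < - int i \<Longrightarrow> pmf (mu2 i) (a, b) = 0"
    and A1_mu0: "\<And>i j a b. int i < k0 \<Longrightarrow> int j < k0 \<Longrightarrow> a < - int i \<or> b < - int j
                   \<Longrightarrow> pmf (mu0 i j) (a, b) = 0"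
    and A2: "\<exists>d g c. d > 0 \<and> g > 0 \<and> c > 0 \<and>
              (\<forall>i j. i \<ge> 0 \<longrightarrow> j \<ge> 0 \<longrightarrow>
                 (\<integral>\<^sup>+ w. ennreal (exp (d * real_of_int (fst w - i) + g * real_of_int (snd w - j)))
                    \<partial>measure_pmf (kerZ k0 mu mu1 mu2 mu0 (i, j))) \<le> ennreal c)"
    and A3_Z0: "irreducible_on (kerZ0 mu) UNIV"
    and A3_Z1: "irreducible_on (kerZ1 k0 mu mu2) {z. fst z \<ge> 0}"
    and A3_Z2: "irreducible_on (kerZ2 k0 mu mu1) {z. snd z \<ge> 0}"
    and A3_Z: "irreducible_on (kerZ k0 mu mu1 mu2 mu0) {z. fst z \<ge> 0 \<and> snd z \<ge> 0}"
    and m1_neg: "measure_pmf.expectation mu (\<lambda>w. real_of_int (fst w)) < 0"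
  shows "\<forall>\<theta>>0. \<forall>k::nat. \<exists>C>0. \<exists>\<delta>>0. \<forall>i n::nat.
           prob_hit_Y_ge (kerZ1 k0 mu mu2) (int k) n (int i, 0)
             \<le> ennreal (C * exp (\<theta> * real i - \<delta> * real n))"
proof (intro allI impI)
  fix \<theta> :: real and k :: nat
  assume th: "\<theta> > 0"
  obtain d g c where dgc: "d > 0" "g > 0" "c > 0" and A2': "\<forall>i j. i \<ge> 0 \<longrightarrow> j \<ge> 0 \<longrightarrow>
                 (\<integral>\<^sup>+ w. ennreal (exp (d * real_of_int (fst w - i) + g * real_of_int (snd w - j)))
                    \<partial>measure_pmf (kerZ k0 mu mu1 mu2 mu0 (i, j))) \<le> ennreal c"
    using A2 by blast
  interpret ck: chaink k0 mu mu2 d g c "int k"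
  proof
    show "k0 \<ge> 1" by (rule k0)
    show "\<And>a b. a < - k0 \<or> b < - k0 \<Longrightarrow> pmf mu (a, b) = 0" by (rule A1_mu)
    show "\<And>i a b. int i < k0 \<Longrightarrow> b < - k0 \<or> a < - int i \<Longrightarrow> pmf (mu2 i) (a, b) = 0" by (rule A1_mu2)
    show "d > 0" "g > 0" "c > 0" by (rule dgc)+
    show "\<And>x. (\<integral>\<^sup>+ ab. ennreal (exp (d * real_of_int (fst ab) + g * real_of_int (snd ab)))
            \<partial>measure_pmf (if x \<ge> k0 then mu else mu2 (nat x))) \<le> ennreal c"
      by (rule mom_from_A2[OF k0 A2'])
    show "irreducible_on (kerZ1 k0 mu mu2) {z. fst z \<ge> 0}" by (rule A3_Z1)
    show "measure_pmf.expectation mu (\<lambda>w. real_of_int (fst w)) < 0" by (rule m1_neg)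
    show "int k \<ge> 0" by simp
  qed
  show "\<exists>C>0. \<exists>\<delta>>0. \<forall>i n::nat.
           prob_hit_Y_ge (kerZ1 k0 mu mu2) (int k) n (int i, 0)
             \<le> ennreal (C * exp (\<theta> * real i - \<delta> * real n))"
    by (rule ck.final[OF th])
qed

end
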